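(* Assume that for every $1\le i<j\le M$ and every $\alpha\in[0,1]$, $\rho^{\mathrm w}_\alpha(p_i,p_j)\in(0,\infty)$. Let $C_M^{\mathrm w}=\min_{1\le i<j\le M}D_C^{\mathrm w}(\mathbb P_i,\mathbb P_j)$. Then \[ L^*_{n,M}=\exp\{-nC_M^{\mathrm w}+o(n)\},\qquad n\to\infty, \] equivalently $\lim_{n\to\infty}-\frac1n\ln L^*_{n,M}=C_M^{\mathrm w}$.
   Context: Fix $M\ge2$. Let $\mu$ be a $\sigma$-finite measure on a Polish space $\mathcal X$, $\mathbb P_1,\dots,\mathbb P_M$ probability measures with strictly positive densities $p_1,\dots,p_M$ w.r.t. $\mu$, and $\varphi\ge0$ a measurable weight with $\varphi(x_1^n)=\prod_{k=1}^n\varphi(x_k)$, $p_i(x_1^n)=\prod_{k=1}^np_i(x_k)$. Weighted affinity $\rho^{\mathrm w}_\alpha(p_i,p_j)=\int\varphi\,p_i^\alpha p_j^{1-\alpha}\,\mathrm d\mu$; weighted Chernoff information $D_C^{\mathrm w}(\mathbb P_i,\mathbb P_j)=\max_{\alpha\in[0,1]}[-\ln\rho^{\mathrm w}_\alpha(p_i,p_j)]$. For measurable $\delta_n:\mathcal X^n\to\{1,\dots,M\}$ let $L_{i,n}(\delta_n)=\mathbb E_{\mathbb P_i^{\otimes n}}[\varphi(X_1^n)\mathbf 1\{\delta_n(X_1^n)\ne i\}]$, $L_{n,M}(\delta_n)=\sum_iL_{i,n}(\delta_n)$, $L^*_{n,M}=\inf_{\delta_n}L_{n,M}(\delta_n)$.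 *)

theory Defs
  imports "HOL-Probability.Probability"
begin

definition w_affinity ::
  "'a measure \<Rightarrow> ('a \<Rightarrow> real) \<Rightarrow> ('a \<Rightarrow> real) \<Rightarrow> ('a \<Rightarrow> real) \<Rightarrow> real \<Rightarrow> ennreal" where
  "w_affinity \<mu> \<phi> p q \<alpha> =
     (\<integral>\<^sup>+ x. ennreal (\<phi> x * p x powr \<alpha> * q x powr (1 - \<alpha>)) \<partial>\<mu>)"

text \<open>Weighted Chernoff information: max over alpha in [0,1] of - ln rho_alpha
  (written as a supremum, which is attained under the standing assumptions).\<close>
definition w_chernoff ::
  "'a measure \<Rightarrow> ('a \<Rightarrow> real) \<Rightarrow> ('a \<Rightarrow> real) \<Rightarrow> ('a \<Rightarrow> real) \<Rightarrow> real" where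
  "w_chernoff \<mu> \<phi> p q = (SUP \<alpha>\<in>{0..1}. - ln (enn2real (w_affinity \<mu> \<phi> p q \<alpha>)))"

text \<open>Points of X^n are functions nat => 'a restricted to {..<n};
  the n-fold product of P_i is the product of the density measures.\<close>
definition weighted_loss ::
  "'a measure \<Rightarrow> ('a \<Rightarrow> real) \<Rightarrow> (nat \<Rightarrow> 'a \<Rightarrow> real) \<Rightarrow> nat \<Rightarrow> ((nat \<Rightarrow> 'a) \<Rightarrow> nat) \<Rightarrow> nat \<Rightarrow> ennreal" where
  "weighted_loss \<mu> \<phi> p n \<delta> i =
     (\<integral>\<^sup>+ x. ennreal (\<Prod>k<n. \<phi> (x k)) * indicator {y. \<delta> y \<noteq> i} x
        \<partial>(PiM {..<n} (\<lambda>_. density \<mu> (\<lambda>z. ennreal (p i z)))))"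

definition total_loss ::
  "'a measure \<Rightarrow> ('a \<Rightarrow> real) \<Rightarrow> (nat \<Rightarrow> 'a \<Rightarrow> real) \<Rightarrow> nat \<Rightarrow> nat \<Rightarrow> ((nat \<Rightarrow> 'a) \<Rightarrow> nat) \<Rightarrow> ennreal" where
  "total_loss \<mu> \<phi> p M n \<delta> = (\<Sum>i=1..M. weighted_loss \<mu> \<phi> p n \<delta> i)"

definition opt_loss ::
  "'a measure \<Rightarrow> ('a \<Rightarrow> real) \<Rightarrow> (nat \<Rightarrow> 'a \<Rightarrow> real) \<Rightarrow> nat \<Rightarrow> nat \<Rightarrow> ennreal" where
  "opt_loss \<mu> \<phi> p M n =
     (INF \<delta>\<in>(PiM {..<n} (\<lambda>_. \<mu>) \<rightarrow>\<^sub>M count_space {1..M}). total_loss \<mu> \<phi> p M n \<delta>)"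

end

theory Submission
  imports Defs
begin

lemma PiM_density_iid:
  fixes g :: "'a \<Rightarrow> real"
  assumes sf: "sigma_finite_measure \<mu>" and fin: "finite I"
    and g: "g \<in> borel_measurable \<mu>" and g0: "\<And>x. g x \<ge> 0"
  shows "PiM I (\<lambda>_. density \<mu> (\<lambda>x. ennreal (g x))) =
         density (PiM I (\<lambda>_. \<mu>)) (\<lambda>x. ennreal (\<Prod>i\<in>I. g (x i)))"
proof -
  interpret S: sigma_finite_measure \<mu> by fact
  note g[measurable]
  have sfd: "sigma_finite_measure (density \<mu> (\<lambda>x. ennreal (g x)))"
    using g by (subst S.sigma_finite_iff_density_finite) auto
  interpret D: product_sigma_finite "\<lambda>_. density \<mu> (\<lambda>x. ennreal (g x))"
    using sfd by (simp add: product_sigma_finite_def)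
  interpret U: product_sigma_finite "\<lambda>_. \<mu>"
    using sf by (simp add: product_sigma_finite_def)
  show ?thesis
  proof (rule D.PiM_eqI[symmetric, OF fin])
    show "sets (density (Pi\<^sub>M I (\<lambda>_. \<mu>)) (\<lambda>x. ennreal (\<Prod>i\<in>I. g (x i)))) =
      sets (Pi\<^sub>M I (\<lambda>_. density \<mu> (\<lambda>x. ennreal (g x))))"
      by (subst sets_density, rule sets_PiM_cong) auto
    fix A assume A: "\<And>i. i \<in> I \<Longrightarrow> A i \<in> sets (density \<mu> (\<lambda>x. ennreal (g x)))"
    then have A': "\<And>i. i \<in> I \<Longrightarrow> A i \<in> sets \<mu>" by simp
    have "emeasure (density (Pi\<^sub>M I (\<lambda>_. \<mu>)) (\<lambda>x. ennreal (\<Prod>i\<in>I. g (x i)))) (Pi\<^sub>E I A)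
        = (\<integral>\<^sup>+ x. ennreal (\<Prod>i\<in>I. g (x i)) * indicator (Pi\<^sub>E I A) x \<partial>Pi\<^sub>M I (\<lambda>_. \<mu>))"
      using A' fin by (subst emeasure_density) (measurable, auto intro!: sets_PiM_I_finite)
    also have "\<dots> = (\<integral>\<^sup>+ x. (\<Prod>i\<in>I. ennreal (g (x i)) * indicator (A i) (x i)) \<partial>Pi\<^sub>M I (\<lambda>_. \<mu>))"
      apply (rule nn_integral_cong)
      apply (auto simp add: fin prod.distrib g0 prod_ennreal[symmetric] indicator_def PiE_iff space_PiM prod_nonneg)
      done
    also have "\<dots> = (\<Prod>i\<in>I. \<integral>\<^sup>+ y. ennreal (g y) * indicator (A i) y \<partial>\<mu>)"
      using A' by (subst U.product_nn_integral_prod) (auto simp: fin)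
    also have "\<dots> = (\<Prod>i\<in>I. emeasure (density \<mu> (\<lambda>x. ennreal (g x))) (A i))"
      using A' by (intro prod.cong refl) (simp add: emeasure_density)
    finally show "emeasure (density (Pi\<^sub>M I (\<lambda>_. \<mu>)) (\<lambda>x. ennreal (\<Prod>i\<in>I. g (x i)))) (Pi\<^sub>E I A)
        = (\<Prod>i\<in>I. emeasure (density \<mu> (\<lambda>x. ennreal (g x))) (A i))" .
  qed
qed

lemma indep_coords:
  assumes Q: "prob_space Q" and n: "I \<noteq> {}" "finite I"
  shows "prob_space.indep_vars (PiM I (\<lambda>_. Q)) (\<lambda>_. Q) (\<lambda>k x. x k) I"
proof -
  interpret Q: prob_space Q by fact
  have pps: "product_prob_space (\<lambda>_. Q)"
    by (simp add: product_prob_space_def product_sigma_finite_def Q.sigma_finite_measure_axioms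
        product_prob_space_axioms_def Q.prob_space_axioms)
  interpret PP: prob_space "PiM I (\<lambda>_. Q)" by (rule prob_space_PiM) (rule Q)
  show ?thesis
  proof (subst PP.indep_vars_iff_distr_eq_PiM'[OF n(1)])
    show "\<And>i. i \<in> I \<Longrightarrow> (\<lambda>x. x i) \<in> measurable (PiM I (\<lambda>_. Q)) Q" by measurable
    have "distr (Pi\<^sub>M I (\<lambda>_. Q)) (Pi\<^sub>M I (\<lambda>i. Q)) (\<lambda>x. restrict (\<lambda>i. x i) I) =
          distr (Pi\<^sub>M I (\<lambda>_. Q)) (Pi\<^sub>M I (\<lambda>i. Q)) (\<lambda>x. x)"
      by (rule distr_cong) (auto simp: space_PiM PiE_iff restrict_def extensional_def)
    also have "\<dots> = Pi\<^sub>M I (\<lambda>i. Q)" by simp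
    also have "\<dots> = Pi\<^sub>M I (\<lambda>i. distr (Pi\<^sub>M I (\<lambda>_. Q)) Q (\<lambda>x. x i))"
      by (rule PiM_cong) (auto simp: product_prob_space.PiM_component[OF pps])
    finally show "distr (Pi\<^sub>M I (\<lambda>_. Q)) (Pi\<^sub>M I (\<lambda>i. Q)) (\<lambda>x. restrict (\<lambda>i. x i) I) =
          Pi\<^sub>M I (\<lambda>i. distr (Pi\<^sub>M I (\<lambda>_. Q)) Q (\<lambda>x. x i))" .
  qed
qed

lemma hoeffding_product:
  fixes Q :: "'a measure" and s :: "'a \<Rightarrow> real"
  assumes Q: "prob_space Q" and s: "s \<in> borel_measurable Q"
    and bnd: "AE x in Q. \<bar>s x\<bar> \<le> B" and e: "e > 0" and n: "n > 0"
  shows "measure (PiM {..<n} (\<lambda>_. Q))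
           {x \<in> space (PiM {..<n} (\<lambda>_. Q)). \<bar>(\<Sum>k<n. s (x k)) - real n * (\<integral>y. s y \<partial>Q)\<bar> \<ge> real n * e}
         \<le> 2 * exp (-2 * (real n * e)\<^sup>2 / (real n * (2 * \<bar>B\<bar> + 2)\<^sup>2))"
proof -
  interpret Q: prob_space Q by fact
  have pps: "product_prob_space (\<lambda>_. Q)"
    by (simp add: product_prob_space_def product_sigma_finite_def Q.sigma_finite_measure_axioms
        product_prob_space_axioms_def Q.prob_space_axioms)
  interpret PP: prob_space "PiM {..<n} (\<lambda>_. Q)" by (rule prob_space_PiM) (rule Q)
  have ind: "PP.indep_vars (\<lambda>_. borel) (\<lambda>k x. s (x k)) {..<n}"
    using PP.indep_vars_compose2[OF indep_coords[OF Q, of "{..<n}"], of "\<lambda>_. s" "\<lambda>_. borel"] n s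
    by auto
  have ex: "(\<integral>x. s (x k) \<partial>PiM {..<n} (\<lambda>_. Q)) = (\<integral>y. s y \<partial>Q)" if "k < n" for k
  proof -
    have "(\<integral>x. s (x k) \<partial>PiM {..<n} (\<lambda>_. Q)) = (\<integral>y. s y \<partial>distr (PiM {..<n} (\<lambda>_. Q)) Q (\<lambda>x. x k))"
      using that s by (subst integral_distr) auto
    also have "\<dots> = (\<integral>y. s y \<partial>Q)" using that by (simp add: product_prob_space.PiM_component[OF pps])
    finally show ?thesis .
  qed
  have AEQ: "AE x in Q. s x \<in> {- \<bar>B\<bar> - 1..\<bar>B\<bar> + 1}" using bnd by eventually_elim auto
  interpret H: Hoeffding_ineq "PiM {..<n} (\<lambda>_. Q)" "{..<n}" "\<lambda>k x. s (x k)" "\<lambda>_. - \<bar>B\<bar> - 1" "\<lambda>_. \<bar>B\<bar> + 1"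
     "\<Sum>k<n. (\<integral>x. s (x k) \<partial>PiM {..<n} (\<lambda>_. Q))"
  apply unfold_locales
  apply (simp_all add: ind)
  subgoal for i
    using product_prob_space.AE_component[OF pps, of i "{..<n}" "\<lambda>x. s x \<in> {- \<bar>B\<bar> - 1..\<bar>B\<bar> + 1}"] AEQ by auto
  done

  have sum: "(\<Sum>k<n. (\<integral>x. s (x k) \<partial>PiM {..<n} (\<lambda>_. Q))) = real n * (\<integral>y. s y \<partial>Q)"
    using ex by simp
  have pos: "(\<Sum>i<n. ((\<bar>B\<bar> + 1) - (- \<bar>B\<bar> - 1))\<^sup>2) > 0" using n
    by (intro sum_pos) (auto simp: add_pos_nonneg)
  have "(\<Sum>i<n. ((\<bar>B\<bar> + 1) - (- \<bar>B\<bar> - 1))\<^sup>2) = real n * (2 * \<bar>B\<bar> + 2)\<^sup>2" by simp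
  with H.Hoeffding_ineq_abs_ge[of "real n * e", OF _ pos] e sum show ?thesis
    by simp
qed

lemma exp_le_quad: fixes y :: real assumes "\<bar>y\<bar> \<le> 1" shows "exp y \<le> 1 + y + y\<^sup>2"
proof (cases "y \<ge> 0")
  case True then show ?thesis using exp_bound[of y] assms by simp
next
  case False
  define u where "u = - y"
  have u: "0 \<le> u" "u \<le> 1" using False assms by (auto simp: u_def)
  have e: "exp u \<ge> 1 + u + u\<^sup>2 / 2" using exp_lower_Taylor_quadratic[of u] u by simp
  have eq1: "1 - u + u\<^sup>2 = (u - 1/2)\<^sup>2 + 3/4" by (simp add: power2_eq_square algebra_simps)
  have pos: "1 - u + u\<^sup>2 > 0" unfolding eq1 by (metis add_nonneg_pos zero_le_power2 zero_less_divide_iff zero_less_numeral)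
  have eq2: "(1 + u + u\<^sup>2 / 2) * (1 - u + u\<^sup>2) = 1 + u\<^sup>2 / 2 + u ^ 3 / 2 + u ^ 4 / 2"
    by (simp add: field_simps power2_eq_square power3_eq_cube power4_eq_xxxx)
  have "u ^ 3 \<ge> 0" "u ^ 4 \<ge> 0" "u\<^sup>2 \<ge> 0" using u by auto
  then have c1: "(1 + u + u\<^sup>2 / 2) * (1 - u + u\<^sup>2) \<ge> 1" unfolding eq2 by linarith
  have "(1 + u + u\<^sup>2 / 2) * (1 - u + u\<^sup>2) \<le> exp u * (1 - u + u\<^sup>2)"
    using e pos by (intro mult_right_mono) auto
  with c1 have c2: "exp u * (1 - u + u\<^sup>2) \<ge> 1" by linarith
  have "exp y \<le> exp y * (exp u * (1 - u + u\<^sup>2))" using c2 by simp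
  also have "\<dots> = (exp y * exp u) * (1 - u + u\<^sup>2)" by (simp add: mult.assoc)
  also have "exp y * exp u = 1" by (simp add: u_def flip: exp_add)
  finally show ?thesis by (simp add: u_def)
qed

locale trunc =
  fixes \<nu> :: "'a measure" and s :: "'a \<Rightarrow> real" and B :: real
  assumes fin: "finite_measure \<nu>"
    and s_meas[measurable]: "s \<in> borel_measurable \<nu>"
    and s_bnd: "\<And>x. x \<in> space \<nu> \<Longrightarrow> \<bar>s x\<bar> \<le> B"
    and pos: "emeasure \<nu> (space \<nu>) > 0"
begin

interpretation F: finite_measure \<nu> by (rule fin)

definition Z :: "real \<Rightarrow> real" where "Z t = (\<integral>x. exp (t * s x) \<partial>\<nu>)"
definition N :: "real \<Rightarrow> real" where "N t = (\<integral>x. s x * exp (t * s x) \<partial>\<nu>)"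

lemma B0: "B \<ge> 0"
proof -
  have "space \<nu> \<noteq> {}" using pos by auto
  then obtain x where "x \<in> space \<nu>" by auto
  from s_bnd[OF this] show ?thesis by simp
qed

lemma ts_bnd: "x \<in> space \<nu> \<Longrightarrow> \<bar>t * s x\<bar> \<le> \<bar>t\<bar> * B"
  unfolding abs_mult using s_bnd by (intro mult_left_mono) auto

lemma int_exp: "integrable \<nu> (\<lambda>x. exp (t * s x))"
proof (rule F.integrable_const_bound[where B="exp (\<bar>t\<bar> * B)"])
  show "AE x in \<nu>. norm (exp (t * s x)) \<le> exp (\<bar>t\<bar> * B)"
    using ts_bnd by (intro AE_I2) (simp add: abs_le_iff)
qed simp

lemma int_sexp: "integrable \<nu> (\<lambda>x. s x * exp (t * s x))"
proof (rule F.integrable_const_bound[where B="B * exp (\<bar>t\<bar> * B)"])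
  show "AE x in \<nu>. norm (s x * exp (t * s x)) \<le> B * exp (\<bar>t\<bar> * B)"
  proof (intro AE_I2)
    fix x assume x: "x \<in> space \<nu>"
    have "exp (t * s x) \<le> exp (\<bar>t\<bar> * B)" using ts_bnd[OF x] by (simp add: abs_le_iff)
    then show "norm (s x * exp (t * s x)) \<le> B * exp (\<bar>t\<bar> * B)"
      using s_bnd[OF x] by (simp add: abs_mult) (intro mult_mono, auto)
  qed
qed simp

lemma Z_pos: "Z t > 0"
proof -
  have "0 < exp (- \<bar>t\<bar> * B) * measure \<nu> (space \<nu>)" using pos by (simp add: F.emeasure_eq_measure)
  also have "\<dots> = (\<integral>x. exp (- \<bar>t\<bar> * B) \<partial>\<nu>)" by simp
  also have "\<dots> \<le> Z t"
    unfolding Z_def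
  proof (intro integral_mono int_exp)
    fix x assume x: "x \<in> space \<nu>"
    have "\<bar>t * s x\<bar> \<le> \<bar>t\<bar> * B" by (rule ts_bnd[OF x])
    then show "exp (- \<bar>t\<bar> * B) \<le> exp (t * s x)" by (simp add: abs_le_iff)
  qed simp
  finally show ?thesis .
qed

lemma N_bnd: "\<bar>N t\<bar> \<le> B * Z t"
proof -
  have "\<bar>N t\<bar> \<le> (\<integral>x. \<bar>s x * exp (t * s x)\<bar> \<partial>\<nu>)"
    unfolding N_def by (rule integral_abs_bound)
  also have "\<dots> \<le> (\<integral>x. B * exp (t * s x) \<partial>\<nu>)"
    by (intro integral_mono int_exp integrable_mult_right integrable_abs int_sexp)
       (auto simp: abs_mult s_bnd intro!: mult_right_mono)
  also have "\<dots> = B * Z t" by (simp add: Z_def)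
  finally show ?thesis .
qed

lemma Z_lower: "Z (t + h) \<ge> Z t + h * N t"
proof -
  have "Z t + h * N t = (\<integral>x. exp (t * s x) + h * (s x * exp (t * s x)) \<partial>\<nu>)"
    unfolding Z_def N_def using int_exp int_sexp by simp
  also have "\<dots> \<le> Z (t + h)" unfolding Z_def
  proof (rule integral_mono)
    show "integrable \<nu> (\<lambda>x. exp (t * s x) + h * (s x * exp (t * s x)))"
      using int_exp int_sexp by auto
    show "integrable \<nu> (\<lambda>x. exp ((t + h) * s x))" by (rule int_exp)
    fix x
    have "exp (t * s x) * (1 + h * s x) \<le> exp (t * s x) * exp (h * s x)"
      by (intro mult_left_mono) (auto simp: exp_ge_add_one_self)
    then show "exp (t * s x) + h * (s x * exp (t * s x)) \<le> exp ((t + h) * s x)"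
      by (simp add: algebra_simps exp_add)
  qed
  finally show ?thesis .
qed

lemma Z_upper: assumes "\<bar>h\<bar> * B \<le> 1" shows "Z (t + h) \<le> Z t + h * N t + h\<^sup>2 * B\<^sup>2 * Z t"
proof -
  have "Z t + h * N t + h\<^sup>2 * B\<^sup>2 * Z t =
      (\<integral>x. exp (t * s x) + h * (s x * exp (t * s x)) + h\<^sup>2 * B\<^sup>2 * exp (t * s x) \<partial>\<nu>)"
    unfolding Z_def N_def using int_exp int_sexp by simp
  moreover have "Z (t + h) \<le> \<dots>" unfolding Z_def
  proof (rule integral_mono)
    show "integrable \<nu> (\<lambda>x. exp (t * s x) + h * (s x * exp (t * s x)) + h\<^sup>2 * B\<^sup>2 * exp (t * s x))"
      using int_exp int_sexp by auto
    show "integrable \<nu> (\<lambda>x. exp ((t + h) * s x))" by (rule int_exp)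
    fix x assume x: "x \<in> space \<nu>"
    have "\<bar>h * s x\<bar> \<le> \<bar>h\<bar> * B" unfolding abs_mult using s_bnd[OF x] by (intro mult_left_mono) auto
    then have hs: "\<bar>h * s x\<bar> \<le> 1" using assms by linarith
    have hs2: "(h * s x)\<^sup>2 \<le> h\<^sup>2 * B\<^sup>2" using s_bnd[OF x]
    proof -
      have "(s x)\<^sup>2 \<le> B\<^sup>2" using s_bnd[OF x] by (metis abs_ge_zero power2_abs power_mono)
      then have "h\<^sup>2 * (s x)\<^sup>2 \<le> h\<^sup>2 * B\<^sup>2" by (intro mult_left_mono) auto
      then show ?thesis by (simp add: power_mult_distrib)
    qed
    have "exp (h * s x) \<le> 1 + h * s x + h\<^sup>2 * B\<^sup>2" using exp_le_quad[OF hs] hs2 by simp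
    then have "exp (t * s x) * exp (h * s x) \<le> exp (t * s x) * (1 + h * s x + h\<^sup>2 * B\<^sup>2)"
      by (intro mult_left_mono) auto
    then show "exp ((t + h) * s x) \<le> exp (t * s x) + h * (s x * exp (t * s x)) + h\<^sup>2 * B\<^sup>2 * exp (t * s x)"
      by (simp add: algebra_simps exp_add)
  qed
  ultimately show ?thesis by simp
qed


lemma Z_diff: assumes "\<bar>h\<bar> * B \<le> 1" shows "\<bar>Z (t + h) - Z t\<bar> \<le> 2 * B * Z t * \<bar>h\<bar>"
proof -
  have l: "Z (t + h) \<ge> Z t + h * N t" by (rule Z_lower)
  have u: "Z (t + h) \<le> Z t + h * N t + h\<^sup>2 * B\<^sup>2 * Z t" by (rule Z_upper[OF assms])
  have Zp: "Z t > 0" by (rule Z_pos)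
  have hN: "\<bar>h * N t\<bar> \<le> \<bar>h\<bar> * (B * Z t)" unfolding abs_mult by (intro mult_left_mono N_bnd) auto
  have "h\<^sup>2 * B\<^sup>2 * Z t = (\<bar>h\<bar> * B) * (\<bar>h\<bar> * B * Z t)" by (simp add: power2_eq_square)
  also have "\<dots> \<le> 1 * (\<bar>h\<bar> * B * Z t)" using assms Zp B0 by (intro mult_right_mono) auto
  finally have q: "h\<^sup>2 * B\<^sup>2 * Z t \<le> \<bar>h\<bar> * B * Z t" by simp
  show ?thesis using l u hN q by (simp add: abs_le_iff algebra_simps)
qed

lemma Z_isCont: "isCont Z t"
  unfolding isCont_def LIM_eq
proof (intro allI impI)
  fix r :: real assume r: "r > 0"
  have Zp: "Z t > 0" by (rule Z_pos)
  define d where "d = min (1 / (B + 1)) (r / (2 * B * Z t + 1))"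
  have "2 * B * Z t \<ge> 0" using B0 Zp by simp
  then have D1: "2 * B * Z t + 1 > 0" by linarith
  from \<open>2 * B * Z t \<ge> 0\<close> have dpos: "d > 0" using r B0 by (simp add: d_def)
  show "\<exists>s>0. \<forall>x. x \<noteq> t \<and> norm (x - t) < s \<longrightarrow> norm (Z x - Z t) < r"
  proof (intro exI[of _ d] conjI allI impI dpos)
    fix x assume x: "x \<noteq> t \<and> norm (x - t) < d"
    define h where "h = x - t"
    have h: "\<bar>h\<bar> < d" using x by (simp add: h_def)
    have "\<bar>h\<bar> \<le> 1 / (B + 1)" using h by (simp add: d_def)
    then have "\<bar>h\<bar> * (B + 1) \<le> 1" using B0 by (subst (asm) pos_le_divide_eq) auto
    then have hB: "\<bar>h\<bar> * B \<le> 1" using B0 by (simp add: algebra_simps)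
    have "\<bar>Z (t + h) - Z t\<bar> \<le> 2 * B * Z t * \<bar>h\<bar>" by (rule Z_diff[OF hB])
    also have "\<dots> \<le> (2 * B * Z t + 1) * \<bar>h\<bar>" by (simp add: algebra_simps)
    also have "\<dots> < (2 * B * Z t + 1) * (r / (2 * B * Z t + 1))"
      using h D1 by (intro mult_strict_left_mono) (auto simp: d_def)
    also have "\<dots> = r" using D1 by simp
    finally show "norm (Z x - Z t) < r" by (simp add: h_def)
  qed
qed

lemma Z_cont: "continuous_on A Z"
  by (intro continuous_at_imp_continuous_on ballI Z_isCont)

lemma Z_decr:
  assumes "\<bar>h\<bar> * B \<le> 1" "h * (N t + h * B\<^sup>2 * Z t) < 0"
  shows "Z (t + h) < Z t"
proof -
  have "Z (t + h) \<le> Z t + h * N t + h\<^sup>2 * B\<^sup>2 * Z t" by (rule Z_upper[OF assms(1)])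
  also have "Z t + h * N t + h\<^sup>2 * B\<^sup>2 * Z t = Z t + h * (N t + h * B\<^sup>2 * Z t)" by (simp add: algebra_simps power2_eq_square)
  finally show ?thesis using assms(2) by simp
qed

lemma Z_min_sign:
  assumes a: "a \<in> {0..1}" and m: "\<And>b. b \<in> {0..1} \<Longrightarrow> Z a \<le> Z b"
  shows "(1 - a) * N a \<ge> 0 \<and> a * N a \<le> 0"
proof -
  have Zp: "Z a > 0" by (rule Z_pos)
  define K where "K = 2 * (B\<^sup>2 * Z a + 1)"
  have "B\<^sup>2 * Z a \<ge> 0" using Zp by simp
  then have Kp: "K > 0" unfolding K_def by (metis add_nonneg_pos mult_pos_pos zero_less_numeral zero_less_one)
  have gen: "\<And>x::real. 0 \<le> x \<Longrightarrow> x < 2 * (x + 1)" by (simp add: algebra_simps)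
  have KB: "B\<^sup>2 * Z a < K" unfolding K_def by (rule gen) (use Zp in simp)
  have c1: "N a \<ge> 0" if a1: "a < 1"
  proof (rule ccontr)
    assume "\<not> N a \<ge> 0" then have Nn: "N a < 0" by simp
    define h where "h = min (1 - a) (min (1 / (B + 1)) (- N a / K))"
    have hp: "h > 0" using a1 Nn Kp B0 by (simp add: h_def divide_neg_pos)
    have "h \<le> 1 / (B + 1)" by (simp add: h_def)
    then have "h * (B + 1) \<le> 1" using B0 by (subst (asm) pos_le_divide_eq) auto
    then have hB: "\<bar>h\<bar> * B \<le> 1" using hp B0 by (simp add: algebra_simps)
    have "h \<le> - N a / K" by (simp add: h_def)
    then have hK: "h * K \<le> - N a" using Kp by (subst (asm) pos_le_divide_eq) auto
    have "h * (B\<^sup>2 * Z a) * 2 \<le> h * K" using hp Zp by (simp add: K_def algebra_simps)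
    then have "N a + h * B\<^sup>2 * Z a < 0" using hK Nn by (simp add: algebra_simps)
    then have "h * (N a + h * B\<^sup>2 * Z a) < 0" using hp by (simp add: mult_pos_neg)
    then have "Z (a + h) < Z a" by (rule Z_decr[OF hB])
    moreover have "a + h \<in> {0..1}" using a hp by (auto simp: h_def)
    ultimately show False using m by fastforce
  qed
  have c2: "N a \<le> 0" if a0: "a > 0"
  proof (rule ccontr)
    assume "\<not> N a \<le> 0" then have Np: "N a > 0" by simp
    define g where "g = min a (min (1 / (B + 1)) (N a / K))"
    have gp: "g > 0" using a0 Np Kp B0 by (simp add: g_def)
    have "g \<le> 1 / (B + 1)" by (simp add: g_def)
    then have "g * (B + 1) \<le> 1" using B0 by (subst (asm) pos_le_divide_eq) auto
    then have gB: "\<bar>- g\<bar> * B \<le> 1" using gp B0 by (simp add: algebra_simps)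
    have "g \<le> N a / K" by (simp add: g_def)
    then have gK: "g * K \<le> N a" using Kp by (subst (asm) pos_le_divide_eq) auto
    have "g * (B\<^sup>2 * Z a) * 2 \<le> g * K" using gp Zp by (simp add: K_def algebra_simps)
    then have "N a + (- g) * B\<^sup>2 * Z a > 0" using gK Np by (simp add: algebra_simps)
    then have "(- g) * (N a + (- g) * B\<^sup>2 * Z a) < 0" using gp by (simp add: mult_pos_neg)
    then have "Z (a + - g) < Z a" by (rule Z_decr[OF gB])
    moreover have "a + - g \<in> {0..1}" using a gp by (auto simp: g_def min_def)
    ultimately show False using m by fastforce
  qed
  show ?thesis
  proof
    show "(1 - a) * N a \<ge> 0" using c1 a by (cases "a < 1") auto
    show "a * N a \<le> 0" using c2 a by (cases "a > 0") (auto simp: mult_nonneg_nonpos)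
  qed
qed

end

lemma LD_trunc:
  fixes \<mu> :: "'a measure" and g s :: "'a \<Rightarrow> real"
  assumes sf: "sigma_finite_measure \<mu>"
    and g[measurable]: "g \<in> borel_measurable \<mu>" and g0: "\<And>x. g x \<ge> 0"
    and s[measurable]: "s \<in> borel_measurable \<mu>" and sB: "\<And>x. \<bar>s x\<bar> \<le> B"
    and gfin: "(\<integral>\<^sup>+x. ennreal (g x) \<partial>\<mu>) < \<infinity>" and gpos: "(\<integral>\<^sup>+x. ennreal (g x) \<partial>\<mu>) > 0"
    and a: "a \<in> {0..1}"
    and sign: "(1 - a) * trunc.N (density \<mu> (\<lambda>x. ennreal (g x))) s a \<ge> 0 \<and>
               a * trunc.N (density \<mu> (\<lambda>x. ennreal (g x))) s a \<le> 0"
    and e: "e > 0"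
  shows "\<forall>\<^sub>F n in sequentially.
      ennreal (trunc.Z (density \<mu> (\<lambda>x. ennreal (g x))) s a ^ n * exp (- real n * e) / 2) \<le>
      (\<integral>\<^sup>+x. ennreal (\<Prod>k<n. g (x k)) * ennreal (min (exp (\<Sum>k<n. s (x k))) 1) \<partial>PiM {..<n} (\<lambda>_. \<mu>))"
proof -
  define \<nu> where "\<nu> = density \<mu> (\<lambda>x. ennreal (g x))"
  have sp: "emeasure \<nu> (space \<nu>) = (\<integral>\<^sup>+x. ennreal (g x) \<partial>\<mu>)"
    unfolding \<nu>_def by (subst emeasure_density) (auto intro!: nn_integral_cong)
  interpret T: trunc \<nu> s B
  proof (rule trunc.intro)
    show "finite_measure \<nu>" using sp gfin by (intro finite_measureI) auto
    show "s \<in> borel_measurable \<nu>" by (simp add: \<nu>_def)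
    show "\<And>x. \<bar>s x\<bar> \<le> B" by (rule sB)
    show "emeasure \<nu> (space \<nu>) > 0" using sp gpos by simp
  qed
  interpret F: finite_measure \<nu> by (rule T.fin)
  define Za where "Za = T.Z a"
  define Na where "Na = T.N a"
  have Zp: "Za > 0" unfolding Za_def by (rule T.Z_pos)
  define c where "c = Na / Za"
  have c1: "(1 - a) * c \<ge> 0" using sign Zp by (simp add: c_def Na_def \<nu>_def)
  have c2: "a * c \<le> 0" using sign Zp by (simp add: c_def Na_def \<nu>_def divide_nonpos_pos)
  define w where "w x = g x * (exp (a * s x) / Za)" for x
  have w[measurable]: "w \<in> borel_measurable \<mu>" unfolding w_def by measurable
  have w0: "w x \<ge> 0" for x unfolding w_def using g0 Zp by simp
  define Q where "Q = density \<nu> (\<lambda>x. ennreal (exp (a * s x) / Za))"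
  have QQ: "Q = density \<mu> (\<lambda>x. ennreal (w x))"
    unfolding Q_def \<nu>_def w_def
    by (subst density_density_eq) (auto simp: ennreal_mult'[symmetric] g0 intro!: density_cong)
  have intQ: "integrable \<nu> (\<lambda>x. exp (a * s x) / Za)"
    using T.int_exp by simp
  have "emeasure Q (space Q) = (\<integral>\<^sup>+x. ennreal (exp (a * s x) / Za) \<partial>\<nu>)"
    unfolding Q_def by (subst emeasure_density) (auto intro!: nn_integral_cong)
  also have "\<dots> = ennreal (\<integral>x. exp (a * s x) / Za \<partial>\<nu>)"
    by (rule nn_integral_eq_integral[OF intQ]) (use Zp in auto)
  also have "(\<integral>x. exp (a * s x) / Za \<partial>\<nu>) = 1"
    using Zp by (simp add: Za_def T.Z_def)
  finally have Qprob: "prob_space Q" by (intro prob_spaceI) simp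
  have cQ: "(\<integral>x. s x \<partial>Q) = c"
  proof -
    have "(\<integral>x. s x \<partial>Q) = (\<integral>x. (exp (a * s x) / Za) * s x \<partial>\<nu>)"
      unfolding Q_def by (subst integral_density) (use Zp in auto)
    also have "\<dots> = (\<integral>x. s x * exp (a * s x) \<partial>\<nu>) / Za"
      by (simp add: mult.commute)
    finally show ?thesis by (simp add: c_def Na_def T.N_def)
  qed
  have Qbnd: "AE x in Q. \<bar>s x\<bar> \<le> B" using sB by simp
  have sQ: "s \<in> borel_measurable Q" by (simp add: QQ)
  define K where "K = (2 * \<bar>B\<bar> + 2)\<^sup>2"
  have Kp: "K > 0" unfolding K_def by (simp add: add_nonneg_pos)
  obtain n0 :: nat where n0: "real n0 > K * ln 4 / (2 * e\<^sup>2)" using reals_Archimedean2 by blast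
  show ?thesis
  proof (rule eventually_sequentiallyI[of "Suc n0"])
    fix n assume nn: "n \<ge> Suc n0"
    then have npos: "n > 0" by simp
    define Qn where "Qn = PiM {..<n} (\<lambda>_. Q)"
    define S where "S x = (\<Sum>k<n. s (x k))" for x
    define Ec where "Ec = {x \<in> space Qn. \<bar>S x - real n * c\<bar> \<ge> real n * e}"
    define E where "E = space Qn - Ec"
    interpret QP: prob_space Qn unfolding Qn_def by (rule prob_space_PiM) (rule Qprob)
    have Ecm: "Ec \<in> sets Qn" unfolding Ec_def S_def Qn_def by measurable (simp add: QQ)
    have hoe: "measure Qn Ec \<le> 2 * exp (-2 * (real n * e)\<^sup>2 / (real n * K))"
      using hoeffding_product[OF Qprob sQ Qbnd e npos] unfolding Qn_def Ec_def S_def K_def cQ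
      by simp
    have "-2 * (real n * e)\<^sup>2 / (real n * K) = - (real n * (2 * e\<^sup>2 / K))"
      using npos by (simp add: power2_eq_square field_simps)
    also have "\<dots> \<le> - (real n0 * (2 * e\<^sup>2 / K))"
      using nn e Kp by (intro le_imp_neg_le mult_right_mono) auto
    also have "\<dots> \<le> - ln 4"
    proof -
      have "K * ln 4 / (2 * e\<^sup>2) * (2 * e\<^sup>2 / K) = ln 4" using Kp e by (simp add: field_simps)
      moreover have "K * ln 4 / (2 * e\<^sup>2) * (2 * e\<^sup>2 / K) \<le> real n0 * (2 * e\<^sup>2 / K)"
        using n0 Kp e by (intro mult_right_mono) auto
      ultimately show ?thesis by linarith
    qed
    finally have "exp (-2 * (real n * e)\<^sup>2 / (real n * K)) \<le> exp (- ln 4)" by simp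
    also have "exp (- ln 4) = 1 / (4::real)" by (simp add: exp_minus)
    finally have "measure Qn Ec \<le> 1/2" using hoe by simp
    then have mE: "measure Qn E \<ge> 1/2" unfolding E_def using QP.prob_compl[OF Ecm] by simp
    define \<mu>n where "\<mu>n = PiM {..<n} (\<lambda>_. \<mu>)"
    have Qn_eq: "Qn = density \<mu>n (\<lambda>x. ennreal (\<Prod>k<n. w (x k)))"
      unfolding Qn_def \<mu>n_def QQ by (rule PiM_density_iid[OF sf]) (auto simp: w0)
    define F where "F x = Za ^ n * exp (- a * S x) * min (exp (S x)) 1" for x
    have F[measurable]: "F \<in> borel_measurable (PiM {..<n} (\<lambda>_. \<mu>))" unfolding F_def S_def by measurable
    have pt: "ennreal (\<Prod>k<n. g (x k)) * ennreal (min (exp (S x)) 1) =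
              ennreal (\<Prod>k<n. w (x k)) * ennreal (F x)" for x
    proof -
      have gw: "g y = w y * Za * exp (- a * s y)" for y
        using Zp by (simp add: w_def field_simps exp_minus)
      have eq: "(\<Prod>k<n. g (x k)) = (\<Prod>k<n. w (x k)) * Za ^ n * exp (- a * S x)"
        by (simp add: gw prod.distrib S_def sum_distrib_left exp_sum)
      have Fn: "F x \<ge> 0" using Zp by (simp add: F_def)
      have "ennreal (\<Prod>k<n. g (x k)) * ennreal (min (exp (S x)) 1) = ennreal ((\<Prod>k<n. g (x k)) * min (exp (S x)) 1)"
        by (rule ennreal_mult[symmetric]) (auto simp: prod_nonneg g0)
      also have "(\<Prod>k<n. g (x k)) * min (exp (S x)) 1 = (\<Prod>k<n. w (x k)) * F x"
        unfolding eq F_def by (simp add: mult.assoc)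
      also have "ennreal ((\<Prod>k<n. w (x k)) * F x) = ennreal (\<Prod>k<n. w (x k)) * ennreal (F x)"
        by (rule ennreal_mult) (auto simp: prod_nonneg w0 Fn)
      finally show ?thesis .
    qed
    have "ennreal (Za ^ n * exp (- real n * e)) * ennreal (1/2)
        \<le> ennreal (Za ^ n * exp (- real n * e)) * ennreal (measure Qn E)"
      using mE by (intro mult_left_mono ennreal_leI) auto
    also have "\<dots> = ennreal (Za ^ n * exp (- real n * e)) * emeasure Qn E"
      by (simp add: QP.emeasure_eq_measure)
    also have "\<dots> = (\<integral>\<^sup>+x. ennreal (Za ^ n * exp (- real n * e)) * indicator E x \<partial>Qn)"
      using Ecm by (simp add: E_def nn_integral_cmult_indicator)
    also have "\<dots> \<le> (\<integral>\<^sup>+x. ennreal (F x) \<partial>Qn)"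
    proof (rule nn_integral_mono)
      fix x assume x: "x \<in> space Qn"
      show "ennreal (Za ^ n * exp (- real n * e)) * indicator E x \<le> ennreal (F x)"
      proof (cases "x \<in> E")
        case False then show ?thesis by simp
      next
        case True
        then have D: "\<bar>S x - real n * c\<bar> < real n * e" using x by (auto simp: E_def Ec_def)
        have a0: "0 \<le> a" "a \<le> 1" using a by auto
        have t1: "real n * ((1 - a) * c) \<ge> 0" using c1 by simp
        have t2: "real n * (a * c) \<le> 0" using c2 by (simp add: mult_nonneg_nonpos)
        have "\<bar>(1 - a) * (S x - real n * c)\<bar> \<le> \<bar>S x - real n * c\<bar>"
          using a0 by (simp add: abs_mult mult_left_le_one_le)
        moreover have "\<bar>a * (S x - real n * c)\<bar> \<le> \<bar>S x - real n * c\<bar>"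
          using a0 by (simp add: abs_mult mult_left_le_one_le)
        ultimately have i1: "- real n * e \<le> (1 - a) * S x" and i2: "- real n * e \<le> - a * S x"
          using D t1 t2 by (auto simp: algebra_simps abs_le_iff)
        have "exp (- real n * e) \<le> exp (- a * S x) * min (exp (S x)) 1"
        proof (cases "S x \<ge> 0")
          case True
          then have "min (exp (S x)) 1 = 1" by simp
          then show ?thesis using i2 by simp
        next
          case False
          then have "min (exp (S x)) 1 = exp (S x)" by simp
          moreover have "exp (- a * S x) * exp (S x) = exp ((1 - a) * S x)"
            by (simp add: algebra_simps flip: exp_add)
          ultimately show ?thesis using i1 by simp
        qed
        then have "Za ^ n * exp (- real n * e) \<le> F x"
          unfolding F_def using Zp by (simp add: mult.assoc)
        then show ?thesis using True by (simp add: ennreal_leI)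
      qed
    qed
    also have "\<dots> = (\<integral>\<^sup>+x. ennreal (\<Prod>k<n. w (x k)) * ennreal (F x) \<partial>\<mu>n)"
      unfolding Qn_eq by (intro nn_integral_density) (unfold \<mu>n_def, measurable)+
    also have "\<dots> = (\<integral>\<^sup>+x. ennreal (\<Prod>k<n. g (x k)) * ennreal (min (exp (\<Sum>k<n. s (x k))) 1) \<partial>\<mu>n)"
      by (rule nn_integral_cong) (use pt in \<open>simp add: S_def\<close>)
    finally have fin: "ennreal (Za ^ n * exp (- real n * e)) * ennreal (1/2) \<le>
      (\<integral>\<^sup>+x. ennreal (\<Prod>k<n. g (x k)) * ennreal (min (exp (\<Sum>k<n. s (x k))) 1) \<partial>\<mu>n)" .
    have "ennreal (Za ^ n * exp (- real n * e) / 2) = ennreal (Za ^ n * exp (- real n * e)) * ennreal (1/2)"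
      by (subst ennreal_mult[symmetric]) (use Zp in auto)
    with fin show "ennreal (trunc.Z (density \<mu> (\<lambda>x. ennreal (g x))) s a ^ n * exp (- real n * e) / 2) \<le>
      (\<integral>\<^sup>+x. ennreal (\<Prod>k<n. g (x k)) * ennreal (min (exp (\<Sum>k<n. s (x k))) 1) \<partial>PiM {..<n} (\<lambda>_. \<mu>))"
      unfolding Za_def \<nu>_def \<mu>n_def by simp
  qed
qed

locale chern =
  fixes \<mu> :: "'a measure" and \<phi> p q :: "'a \<Rightarrow> real"
  assumes sf: "sigma_finite_measure \<mu>"
    and phi_m[measurable]: "\<phi> \<in> borel_measurable \<mu>"
    and p_m[measurable]: "p \<in> borel_measurable \<mu>"
    and q_m[measurable]: "q \<in> borel_measurable \<mu>"
    and p_pos: "\<And>x. p x > 0" and q_pos: "\<And>x. q x > 0" and phi0: "\<And>x. \<phi> x \<ge> 0"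
    and aff: "\<And>\<alpha>. \<alpha> \<in> {0..1} \<Longrightarrow> 0 < w_affinity \<mu> \<phi> p q \<alpha> \<and> w_affinity \<mu> \<phi> p q \<alpha> < \<infinity>"
begin

definition L :: "'a \<Rightarrow> real" where "L x = ln (p x) - ln (q x)"
definition g :: "nat \<Rightarrow> 'a \<Rightarrow> real" where "g m x = \<phi> x * q x * indicator {y. \<bar>L y\<bar> \<le> real m} x"
definition s :: "nat \<Rightarrow> 'a \<Rightarrow> real" where "s m x = (if \<bar>L x\<bar> \<le> real m then L x else 0)"
definition G :: "nat \<Rightarrow> real \<Rightarrow> ennreal" where "G m a = (\<integral>\<^sup>+x. ennreal (g m x * exp (a * L x)) \<partial>\<mu>)"
definition \<nu> :: "nat \<Rightarrow> 'a measure" where "\<nu> m = density \<mu> (\<lambda>x. ennreal (g m x))"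
abbreviation \<rho> where "\<rho> a \<equiv> w_affinity \<mu> \<phi> p q a"

lemma L_m[measurable]: "L \<in> borel_measurable \<mu>" unfolding L_def by measurable
lemma g_m[measurable]: "g m \<in> borel_measurable \<mu>" unfolding g_def by measurable
lemma s_m[measurable]: "s m \<in> borel_measurable \<mu>" unfolding s_def by measurable
lemma g0: "g m x \<ge> 0" unfolding g_def using phi0 q_pos by (simp add: less_imp_le)
lemma s_bnd: "\<bar>s m x\<bar> \<le> real m" unfolding s_def by auto

lemma aff_eq: "\<rho> a = (\<integral>\<^sup>+x. ennreal (\<phi> x * q x * exp (a * L x)) \<partial>\<mu>)"
  unfolding w_affinity_def
proof (intro nn_integral_cong arg_cong[where f=ennreal])
  fix x
  have "p x powr a * q x powr (1 - a) = exp (a * ln (p x)) * exp ((1 - a) * ln (q x))"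
    using p_pos[of x] q_pos[of x] by (simp add: powr_def)
  also have "\<dots> = exp (ln (q x)) * exp (a * L x)"
    by (simp add: L_def algebra_simps flip: exp_add)
  also have "\<dots> = q x * exp (a * L x)" using q_pos[of x] by simp
  finally show "\<phi> x * p x powr a * q x powr (1 - a) = \<phi> x * q x * exp (a * L x)"
    by (simp add: mult.assoc)
qed

lemma G_mono: "m \<le> m' \<Longrightarrow> G m a \<le> G m' a"
  unfolding G_def
  by (intro nn_integral_mono ennreal_leI mult_right_mono)
     (auto simp: g_def indicator_def phi0 q_pos less_imp_le)

lemma G_SUP: "(SUP m. G m a) = \<rho> a"
proof -
  have "(SUP m. G m a) = (\<integral>\<^sup>+x. (SUP m. ennreal (g m x * exp (a * L x))) \<partial>\<mu>)"
    unfolding G_def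
  proof (rule nn_integral_monotone_convergence_SUP[symmetric])
    show "incseq (\<lambda>m x. ennreal (g m x * exp (a * L x)))"
      by (intro incseq_SucI le_funI ennreal_leI mult_right_mono)
         (auto simp: g_def indicator_def phi0 q_pos less_imp_le)
  qed simp
  also have "\<dots> = (\<integral>\<^sup>+x. ennreal (\<phi> x * q x * exp (a * L x)) \<partial>\<mu>)"
  proof (intro nn_integral_cong antisym)
    fix x
    show "(SUP m. ennreal (g m x * exp (a * L x))) \<le> ennreal (\<phi> x * q x * exp (a * L x))"
      by (intro SUP_least ennreal_leI mult_right_mono)
         (auto simp: g_def indicator_def phi0 q_pos less_imp_le)
    obtain m :: nat where "\<bar>L x\<bar> \<le> real m" using real_arch_simple by blast
    then have "ennreal (\<phi> x * q x * exp (a * L x)) = ennreal (g m x * exp (a * L x))"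
      by (simp add: g_def)
    also have "\<dots> \<le> (SUP m. ennreal (g m x * exp (a * L x)))" by (rule SUP_upper) simp
    finally show "ennreal (\<phi> x * q x * exp (a * L x)) \<le> (SUP m. ennreal (g m x * exp (a * L x)))" .
  qed
  finally show ?thesis by (simp add: aff_eq)
qed

lemma G_le: "G m a \<le> \<rho> a"
  unfolding G_SUP[symmetric] by (rule SUP_upper) simp

lemma nu_space: "emeasure (\<nu> m) (space (\<nu> m)) = G m 0"
  unfolding \<nu>_def G_def by (subst emeasure_density) (auto intro!: nn_integral_cong)

lemma trunc_m: assumes "G m 0 > 0" shows "trunc (\<nu> m) (s m) (real m)"
proof (rule trunc.intro)
  have "G m 0 < \<infinity>" using G_le[of m 0] aff[of 0] by (simp add: le_less_trans)
  then show "finite_measure (\<nu> m)" using nu_space by (intro finite_measureI) auto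
  show "s m \<in> borel_measurable (\<nu> m)" by (simp add: \<nu>_def)
  show "\<And>x. \<bar>s m x\<bar> \<le> real m" by (rule s_bnd)
  show "emeasure (\<nu> m) (space (\<nu> m)) > 0" using nu_space assms by simp
qed

lemma Z_eq: assumes "G m 0 > 0" shows "trunc.Z (\<nu> m) (s m) a = enn2real (G m a)"
proof -
  have "trunc.Z (\<nu> m) (s m) a = (\<integral>x. exp (a * s m x) \<partial>\<nu> m)" by (simp add: trunc.Z_def[OF trunc_m[OF assms]])
  also have "\<dots> = enn2real (\<integral>\<^sup>+x. ennreal (exp (a * s m x)) \<partial>\<nu> m)"
    by (rule integral_eq_nn_integral) (auto simp: \<nu>_def)
  also have "(\<integral>\<^sup>+x. ennreal (exp (a * s m x)) \<partial>\<nu> m) = G m a"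
    unfolding \<nu>_def G_def
    by (subst nn_integral_density) (auto intro!: nn_integral_cong simp: g_def s_def indicator_def ennreal_mult'[symmetric] ennreal_mult[symmetric] phi0 q_pos less_imp_le)
  finally show ?thesis .
qed

end

context chern begin

lemma pos_G: "\<exists>m0. G m0 0 > 0"
proof -
  have "0 < \<rho> 0" using aff[of 0] by simp
  then have "0 < (SUP m. G m 0)" by (simp add: G_SUP)
  then show ?thesis by (simp add: less_SUP_iff)
qed

lemma G_fin: "a \<in> {0..1} \<Longrightarrow> G m a < \<infinity>"
  using G_le[of m a] aff[of a] by (simp add: le_less_trans)

lemma rho_low: "\<exists>c>0. \<forall>a\<in>{0..1}. c \<le> enn2real (\<rho> a)"
proof -
  obtain m0 where m0: "G m0 0 > 0" using pos_G by blast
  define \<gamma> where "\<gamma> = enn2real (G m0 0)"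
  have G0: "G m0 0 = ennreal \<gamma>" using G_fin[of 0 m0] by (simp add: \<gamma>_def)
  have \<gamma>p: "\<gamma> > 0" using m0 G0 by simp
  show ?thesis
  proof (intro exI[of _ "exp (- real m0) * \<gamma>"] conjI ballI)
    show "exp (- real m0) * \<gamma> > 0" using \<gamma>p by simp
    fix a :: real assume a: "a \<in> {0..1}"
    have "ennreal (exp (- real m0)) * G m0 0 = (\<integral>\<^sup>+x. ennreal (exp (- real m0)) * ennreal (g m0 x * exp (0 * L x)) \<partial>\<mu>)"
      unfolding G_def by (rule nn_integral_cmult[symmetric]) simp
    also have "\<dots> \<le> G m0 a" unfolding G_def
    proof (intro nn_integral_mono)
      fix x
      show "ennreal (exp (- real m0)) * ennreal (g m0 x * exp (0 * L x)) \<le> ennreal (g m0 x * exp (a * L x))"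
      proof (cases "\<bar>L x\<bar> \<le> real m0")
        case True
        have "a * L x \<ge> - real m0"
        proof -
          have "\<bar>a * L x\<bar> \<le> 1 * \<bar>L x\<bar>" using a unfolding abs_mult by (intro mult_right_mono) auto
          then show ?thesis using True abs_ge_minus_self[of "a * L x"] by linarith
        qed
        then have "exp (- real m0) \<le> exp (a * L x)" by simp
        then have "exp (- real m0) * g m0 x \<le> exp (a * L x) * g m0 x" using g0 by (intro mult_right_mono) auto
        then show ?thesis by (simp add: ennreal_mult[symmetric] g0 mult.commute)
      next
        case False then show ?thesis by (simp add: g_def)
      qed
    qed
    also have "\<dots> \<le> \<rho> a" by (rule G_le)
    finally have X: "ennreal (exp (- real m0)) * ennreal \<gamma> \<le> \<rho> a" by (simp add: G0)
    have "ennreal (exp (- real m0) * \<gamma>) = ennreal (exp (- real m0)) * ennreal \<gamma>"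
      by (rule ennreal_mult) (use \<gamma>p in auto)
    with X have "ennreal (exp (- real m0) * \<gamma>) \<le> \<rho> a" by simp
    then show "exp (- real m0) * \<gamma> \<le> enn2real (\<rho> a)"
    proof -
      have "enn2real (ennreal (exp (- real m0) * \<gamma>)) \<le> enn2real (\<rho> a)"
        using aff[OF a] \<open>ennreal (exp (- real m0) * \<gamma>) \<le> \<rho> a\<close> by (intro enn2real_mono) auto
      then show ?thesis using \<gamma>p by simp
    qed
  qed
qed

lemma bdd: "bdd_above ((\<lambda>a. - ln (enn2real (\<rho> a))) ` {0..1})"
proof -
  obtain c where c: "c > 0" "\<And>a. a \<in> {0..1} \<Longrightarrow> c \<le> enn2real (\<rho> a)" using rho_low by blast
  show ?thesis
  proof (rule bdd_aboveI2)
    fix a :: real assume "a \<in> {0..1}"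
    then have "ln c \<le> ln (enn2real (\<rho> a))" using c by (intro ln_mono) auto
    then show "- ln (enn2real (\<rho> a)) \<le> - ln c" by simp
  qed
qed

lemma D_upper: "a \<in> {0..1} \<Longrightarrow> - ln (enn2real (\<rho> a)) \<le> w_chernoff \<mu> \<phi> p q"
  unfolding w_chernoff_def by (rule cSUP_upper[OF _ bdd])

lemma rho_pos_real: "a \<in> {0..1} \<Longrightarrow> enn2real (\<rho> a) > 0"
  using rho_low by (meson less_le_trans)

lemma rho_ge_D: "a \<in> {0..1} \<Longrightarrow> exp (- w_chernoff \<mu> \<phi> p q) \<le> enn2real (\<rho> a)"
proof -
  assume a: "a \<in> {0..1}"
  have "- w_chernoff \<mu> \<phi> p q \<le> ln (enn2real (\<rho> a))" using D_upper[OF a] by simp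
  then have "exp (- w_chernoff \<mu> \<phi> p q) \<le> exp (ln (enn2real (\<rho> a)))" by simp
  then show ?thesis using rho_pos_real[OF a] by simp
qed

end

context chern begin

lemma real_lt_G: assumes "ennreal c < G m a" "a \<in> {0..1}" shows "c < enn2real (G m a)"
proof -
  have "G m a = ennreal (enn2real (G m a))" using G_fin[OF assms(2)] by simp
  with assms(1) have "ennreal c < ennreal (enn2real (G m a))" by simp
  then show ?thesis by (cases "c \<ge> 0") (auto simp: ennreal_less_iff not_le intro: less_le_trans)
qed

lemma cover:
  assumes e: "e > 0"
  shows "\<exists>M. G M 0 > 0 \<and> (\<forall>a\<in>{0..1}. exp (- w_chernoff \<mu> \<phi> p q - e) < enn2real (G M a))"
proof -
  define c where "c = exp (- w_chernoff \<mu> \<phi> p q - e)"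
  obtain m0 where m0: "G m0 0 > 0" using pos_G by blast
  define U where "U m = (if G m 0 > 0 then {a. c < trunc.Z (\<nu> m) (s m) a} else {})" for m
  have opn: "open (U m)" for m
  proof (cases "G m 0 > 0")
    case True
    interpret T: trunc "\<nu> m" "s m" "real m" by (rule trunc_m[OF True])
    have "open {a. c < T.Z a}" by (rule open_Collect_less[OF continuous_on_const T.Z_cont])
    then show ?thesis using True by (simp add: U_def)
  qed (simp add: U_def)
  have cov: "{0..1} \<subseteq> (\<Union>m\<in>UNIV. U m)"
  proof
    fix a :: real assume a: "a \<in> {0..1}"
    have "c < exp (- w_chernoff \<mu> \<phi> p q)" using e by (simp add: c_def)
    also have "\<dots> \<le> enn2real (\<rho> a)" by (rule rho_ge_D[OF a])
    finally have "ennreal c < ennreal (enn2real (\<rho> a))"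
      using rho_pos_real[OF a] by (auto simp: ennreal_less_iff c_def)
    also have "ennreal (enn2real (\<rho> a)) = (SUP m. G m a)" using aff[OF a] by (simp add: G_SUP)
    finally have "\<exists>m. ennreal c < G m a" by (simp add: less_SUP_iff)
    then obtain m where m: "ennreal c < G m a" by blast
    define m' where "m' = max m m0"
    have "G m0 0 \<le> G m' 0" by (rule G_mono) (simp add: m'_def)
    with m0 have pos': "G m' 0 > 0" by simp
    have "G m a \<le> G m' a" by (rule G_mono) (simp add: m'_def)
    with m have "ennreal c < G m' a" by simp
    then have "c < enn2real (G m' a)" by (rule real_lt_G[OF _ a])
    then have "a \<in> U m'" using pos' by (simp add: U_def Z_eq[OF pos'])
    then show "a \<in> (\<Union>m\<in>UNIV. U m)" by blast
  qed
  obtain C' where C': "finite C'" "{0..1} \<subseteq> (\<Union>m\<in>C'. U m)"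
    by (rule compactE_image[OF compact_Icc opn cov]) auto
  define M where "M = Max (insert m0 C')"
  have Mge: "m \<le> M" if "m \<in> insert m0 C'" for m using C'(1) that by (simp add: M_def)
  have "G m0 0 \<le> G M 0" by (rule G_mono[OF Mge]) simp
  with m0 have posM: "G M 0 > 0" by simp
  show ?thesis
  proof (intro exI[of _ M] conjI posM ballI)
    fix a :: real assume a: "a \<in> {0..1}"
    then obtain m where m: "m \<in> C'" "a \<in> U m" using C'(2) by blast
    then have pm: "G m 0 > 0" and lt: "c < trunc.Z (\<nu> m) (s m) a"
      unfolding U_def by (cases "G m 0 > 0"; simp)+
    have "c < enn2real (G m a)" using lt by (simp add: Z_eq[OF pm])
    also have "\<dots> \<le> enn2real (G M a)"
      using G_fin[OF a] by (intro enn2real_mono G_mono Mge) (auto simp: m)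
    finally show "exp (- w_chernoff \<mu> \<phi> p q - e) < enn2real (G M a)" by (simp add: c_def)
  qed
qed

end

context chern begin

lemma pt_trunc:
  fixes n :: nat and x :: "nat \<Rightarrow> 'a"
  shows "ennreal (\<Prod>k<n. g M (x k)) * ennreal (min (exp (\<Sum>k<n. s M (x k))) 1) \<le>
   ennreal (\<Prod>k<n. \<phi> (x k)) * ennreal (min (\<Prod>k<n. p (x k)) (\<Prod>k<n. q (x k)))"
proof -
  have lhs: "ennreal (\<Prod>k<n. g M (x k)) * ennreal (min (exp (\<Sum>k<n. s M (x k))) 1) =
      ennreal ((\<Prod>k<n. g M (x k)) * min (exp (\<Sum>k<n. s M (x k))) 1)"
    by (rule ennreal_mult[symmetric]) (auto simp: prod_nonneg g0)
  have rhs: "ennreal (\<Prod>k<n. \<phi> (x k)) * ennreal (min (\<Prod>k<n. p (x k)) (\<Prod>k<n. q (x k))) =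
      ennreal ((\<Prod>k<n. \<phi> (x k)) * min (\<Prod>k<n. p (x k)) (\<Prod>k<n. q (x k)))"
    by (rule ennreal_mult[symmetric]) (auto simp: prod_nonneg phi0 p_pos q_pos less_imp_le)
  have "(\<Prod>k<n. g M (x k)) * min (exp (\<Sum>k<n. s M (x k))) 1 \<le>
        (\<Prod>k<n. \<phi> (x k)) * min (\<Prod>k<n. p (x k)) (\<Prod>k<n. q (x k))"
  proof (cases "\<forall>k<n. \<bar>L (x k)\<bar> \<le> real M")
    case True
    define P where "P = (\<Prod>k<n. p (x k))"
    define Q where "Q = (\<Prod>k<n. q (x k))"
    have Qp: "Q > 0" unfolding Q_def by (intro prod_pos) (auto simp: q_pos)
    have g_eq: "(\<Prod>k<n. g M (x k)) = (\<Prod>k<n. \<phi> (x k)) * Q"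
      unfolding Q_def using True by (simp add: g_def prod.distrib)
    have "(\<Sum>k<n. s M (x k)) = (\<Sum>k<n. L (x k))" using True by (simp add: s_def)
    moreover have "exp (\<Sum>k<n. L (x k)) = (\<Prod>k<n. exp (L (x k)))" by (rule exp_sum[OF finite_lessThan])
    ultimately have "exp (\<Sum>k<n. s M (x k)) = (\<Prod>k<n. exp (L (x k)))" by simp
    also have "\<dots> = (\<Prod>k<n. p (x k) / q (x k))"
      using p_pos q_pos by (intro prod.cong refl) (simp add: L_def exp_diff)
    also have "\<dots> = P / Q" by (simp add: P_def Q_def prod_dividef)
    finally have e_eq: "exp (\<Sum>k<n. s M (x k)) = P / Q" .
    have "Q * min (P / Q) 1 = min P Q" using Qp
      by (cases "P \<le> Q") (auto simp: min_def field_simps)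
    then show ?thesis unfolding g_eq e_eq P_def[symmetric] Q_def[symmetric]
      by (simp add: mult.assoc)
  next
    case False
    then obtain k where k: "k < n" "\<bar>L (x k)\<bar> > real M" by auto
    then have z: "(\<Prod>k<n. g M (x k)) = 0" by (intro prod_zero) (auto simp: g_def intro!: bexI[of _ k])
    have "0 \<le> (\<Prod>k<n. \<phi> (x k)) * min (\<Prod>k<n. p (x k)) (\<Prod>k<n. q (x k))"
      by (simp add: prod_nonneg phi0 p_pos q_pos less_imp_le)
    then show ?thesis unfolding z by simp
  qed
  then show ?thesis unfolding lhs rhs by (rule ennreal_leI)
qed


lemma CLB:
  assumes e: "e > 0"
  shows "\<forall>\<^sub>F n in sequentially. ennreal (exp (- real n * (w_chernoff \<mu> \<phi> p q + e))) \<le>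
     (\<integral>\<^sup>+x. ennreal (\<Prod>k<n. \<phi> (x k)) * ennreal (min (\<Prod>k<n. p (x k)) (\<Prod>k<n. q (x k))) \<partial>PiM {..<n} (\<lambda>_. \<mu>))"
proof -
  define D where "D = w_chernoff \<mu> \<phi> p q"
  have e3: "e / 3 > 0" using e by simp
  obtain M where posM: "G M 0 > 0" and big: "\<And>a. a \<in> {0..1} \<Longrightarrow> exp (- D - e / 3) < enn2real (G M a)"
    using cover[OF e3] unfolding D_def by blast
  interpret T: trunc "\<nu> M" "s M" "real M" by (rule trunc_m[OF posM])
  obtain a where a: "a \<in> {0..1}" and amin: "\<And>b. b \<in> {0..1} \<Longrightarrow> T.Z a \<le> T.Z b"
    using continuous_attains_inf[OF compact_Icc _ T.Z_cont, of 0 1] by auto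
  have sign: "(1 - a) * T.N a \<ge> 0 \<and> a * T.N a \<le> 0" by (rule T.Z_min_sign[OF a amin])
  have Za: "exp (- D - e / 3) < T.Z a" using big[OF a] by (simp add: Z_eq[OF posM])
  have gint: "(\<integral>\<^sup>+x. ennreal (g M x) \<partial>\<mu>) = G M 0" unfolding G_def by simp
  have gfin: "(\<integral>\<^sup>+x. ennreal (g M x) \<partial>\<mu>) < \<infinity>" unfolding gint by (rule G_fin) simp
  have gpos: "(\<integral>\<^sup>+x. ennreal (g M x) \<partial>\<mu>) > 0" unfolding gint by (rule posM)
  have LD: "\<forall>\<^sub>F n in sequentially.
      ennreal (T.Z a ^ n * exp (- real n * (e / 3)) / 2) \<le>
      (\<integral>\<^sup>+x. ennreal (\<Prod>k<n. g M (x k)) * ennreal (min (exp (\<Sum>k<n. s M (x k))) 1) \<partial>PiM {..<n} (\<lambda>_. \<mu>))"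
    using LD_trunc[OF sf g_m g0 s_m s_bnd gfin gpos a _ e3] sign unfolding \<nu>_def by blast
  obtain n1 :: nat where n1: "real n1 > 3 * ln 2 / e" using reals_Archimedean2 by blast
  have ev2: "\<forall>\<^sub>F n in sequentially. n \<ge> n1" by (rule eventually_ge_at_top)
  show ?thesis
    using eventually_conj[OF LD ev2]
  proof (rule eventually_mono)
    fix n assume H: "ennreal (T.Z a ^ n * exp (- real n * (e / 3)) / 2) \<le>
      (\<integral>\<^sup>+x. ennreal (\<Prod>k<n. g M (x k)) * ennreal (min (exp (\<Sum>k<n. s M (x k))) 1) \<partial>PiM {..<n} (\<lambda>_. \<mu>)) \<and> n \<ge> n1"
    have Zp: "T.Z a > 0" by (rule T.Z_pos)
    have "exp (- D - e / 3) ^ n \<le> T.Z a ^ n" using Za by (intro power_mono) auto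
    then have p1: "exp (- real n * (D + e / 3)) \<le> T.Z a ^ n"
      by (simp add: exp_of_nat_mult[symmetric] algebra_simps)
    have "real n * (e / 3) \<ge> real n1 * (e / 3)" using H e by (intro mult_right_mono) auto
    moreover have "real n1 * (e / 3) \<ge> ln 2" using n1 e by (simp add: field_simps)
    ultimately have "ln 2 \<le> real n * (e / 3)" by linarith
    then have "exp (ln 2) \<le> exp (real n * (e / 3))" by (simp only: exp_le_cancel_iff)
    then have two: "exp (real n * (e / 3)) \<ge> 2" by simp
    have "exp (- real n * (D + e)) = exp (- real n * (D + e / 3)) * exp (- real n * (e / 3)) / exp (real n * (e / 3))"
      by (simp add: algebra_simps flip: exp_add exp_diff)
    also have "\<dots> \<le> T.Z a ^ n * exp (- real n * (e / 3)) / 2"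
      using p1 two Zp by (intro frac_le mult_right_mono) auto
    finally have r1: "exp (- real n * (D + e)) \<le> T.Z a ^ n * exp (- real n * (e / 3)) / 2" .
    have "ennreal (exp (- real n * (D + e))) \<le> ennreal (T.Z a ^ n * exp (- real n * (e / 3)) / 2)"
      by (rule ennreal_leI[OF r1])
    also have "\<dots> \<le> (\<integral>\<^sup>+x. ennreal (\<Prod>k<n. g M (x k)) * ennreal (min (exp (\<Sum>k<n. s M (x k))) 1) \<partial>PiM {..<n} (\<lambda>_. \<mu>))"
      using H by simp
    also have "\<dots> \<le> (\<integral>\<^sup>+x. ennreal (\<Prod>k<n. \<phi> (x k)) * ennreal (min (\<Prod>k<n. p (x k)) (\<Prod>k<n. q (x k))) \<partial>PiM {..<n} (\<lambda>_. \<mu>))"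
      by (intro nn_integral_mono pt_trunc)
    finally show "ennreal (exp (- real n * (w_chernoff \<mu> \<phi> p q + e))) \<le>
     (\<integral>\<^sup>+x. ennreal (\<Prod>k<n. \<phi> (x k)) * ennreal (min (\<Prod>k<n. p (x k)) (\<Prod>k<n. q (x k))) \<partial>PiM {..<n} (\<lambda>_. \<mu>))"
      by (simp add: D_def)
  qed
qed

end

lemma pair_bound:
  fixes \<mu> :: "'a measure" and \<phi> p q :: "'a \<Rightarrow> real" and n :: nat
  assumes sf: "sigma_finite_measure \<mu>"
    and [measurable]: "\<phi> \<in> borel_measurable \<mu>" "p \<in> borel_measurable \<mu>" "q \<in> borel_measurable \<mu>"
    and pp: "\<And>x. p x > 0" and qp: "\<And>x. q x > 0" and f0: "\<And>x. \<phi> x \<ge> 0"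
    and a: "a \<in> {0..1}"
  shows "(\<integral>\<^sup>+x. ennreal (\<Prod>k<n. \<phi> (x k)) * ennreal (\<Prod>k<n. p (x k)) *
            indicator {y. (\<Prod>k<n. p (y k)) \<le> (\<Prod>k<n. q (y k))} x \<partial>PiM {..<n} (\<lambda>_. \<mu>))
         \<le> w_affinity \<mu> \<phi> p q a ^ n"
proof -
  interpret U: product_sigma_finite "\<lambda>_::nat. \<mu>"
    using sf by (simp add: product_sigma_finite_def)
  define f where "f y = \<phi> y * p y powr a * q y powr (1 - a)" for y
  have f_m[measurable]: "f \<in> borel_measurable \<mu>" unfolding f_def by measurable
  have "(\<integral>\<^sup>+x. ennreal (\<Prod>k<n. \<phi> (x k)) * ennreal (\<Prod>k<n. p (x k)) *
            indicator {y. (\<Prod>k<n. p (y k)) \<le> (\<Prod>k<n. q (y k))} x \<partial>PiM {..<n} (\<lambda>_. \<mu>))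
        \<le> (\<integral>\<^sup>+x. (\<Prod>k<n. ennreal (f (x k))) \<partial>PiM {..<n} (\<lambda>_. \<mu>))"
  proof (intro nn_integral_mono)
    fix x :: "nat \<Rightarrow> 'a"
    define P where "P = (\<Prod>k<n. p (x k))"
    define Q where "Q = (\<Prod>k<n. q (x k))"
    define F where "F = (\<Prod>k<n. \<phi> (x k))"
    have Pp: "P > 0" unfolding P_def by (intro prod_pos) (auto simp: pp)
    have Qp: "Q > 0" unfolding Q_def by (intro prod_pos) (auto simp: qp)
    have F0: "F \<ge> 0" unfolding F_def by (intro prod_nonneg) (auto simp: f0)
    have prodf: "(\<Prod>k<n. f (x k)) = F * (P powr a * Q powr (1 - a))"
      unfolding f_def F_def P_def Q_def
      using pp qp by (simp add: prod.distrib prod_powr_distrib less_imp_le mult.assoc)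
    have "F * P * indicator {y. (\<Prod>k<n. p (y k)) \<le> (\<Prod>k<n. q (y k))} x \<le> F * (P powr a * Q powr (1 - a))"
    proof (cases "P \<le> Q")
      case True
      have "P = P powr a * P powr (1 - a)" using Pp by (simp flip: powr_add)
      also have "\<dots> \<le> P powr a * Q powr (1 - a)"
        using True Pp a by (intro mult_left_mono powr_mono2) auto
      finally have "F * P \<le> F * (P powr a * Q powr (1 - a))" using F0 by (intro mult_left_mono)
      then show ?thesis using True by (simp add: P_def Q_def indicator_def)
    next
      case False
      then show ?thesis using F0 by (simp add: P_def Q_def indicator_def)
    qed
    then have main: "ennreal (F * P * indicator {y. (\<Prod>k<n. p (y k)) \<le> (\<Prod>k<n. q (y k))} x)
       \<le> ennreal (\<Prod>k<n. f (x k))" unfolding prodf by (rule ennreal_leI)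
    have f0': "f y \<ge> 0" for y unfolding f_def using f0 by simp
    have R: "(\<Prod>k<n. ennreal (f (x k))) = ennreal (\<Prod>k<n. f (x k))"
      by (rule prod_ennreal) (simp add: f0')
    have Lq: "ennreal (\<Prod>k<n. \<phi> (x k)) * ennreal (\<Prod>k<n. p (x k)) *
            indicator {y. (\<Prod>k<n. p (y k)) \<le> (\<Prod>k<n. q (y k))} x =
          ennreal (F * P * indicator {y. (\<Prod>k<n. p (y k)) \<le> (\<Prod>k<n. q (y k))} x)"
      unfolding F_def[symmetric] P_def[symmetric]
      by (cases "x \<in> {y. (\<Prod>k<n. p (y k)) \<le> (\<Prod>k<n. q (y k))}")
         (simp_all add: ennreal_mult F0 Pp less_imp_le)
    show "ennreal (\<Prod>k<n. \<phi> (x k)) * ennreal (\<Prod>k<n. p (x k)) *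
            indicator {y. (\<Prod>k<n. p (y k)) \<le> (\<Prod>k<n. q (y k))} x \<le> (\<Prod>k<n. ennreal (f (x k)))"
      unfolding Lq R by (rule main)
  qed
  also have "\<dots> = (\<Prod>k<n. \<integral>\<^sup>+y. ennreal (f y) \<partial>\<mu>)"
    by (rule U.product_nn_integral_prod) auto
  also have "\<dots> = w_affinity \<mu> \<phi> p q a ^ n"
    by (simp add: w_affinity_def f_def)
  finally show ?thesis .
qed

locale setting =
  fixes \<mu> :: "'a measure" and M :: nat and p :: "nat \<Rightarrow> 'a \<Rightarrow> real" and \<phi> :: "'a \<Rightarrow> real"
  assumes M: "M \<ge> 2"
    and sfin: "sigma_finite_measure \<mu>"
    and p_meas: "\<And>i. i \<in> {1..M} \<Longrightarrow> p i \<in> borel_measurable \<mu>"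
    and p_pos: "\<And>i x. i \<in> {1..M} \<Longrightarrow> p i x > 0"
    and phi_meas[measurable]: "\<phi> \<in> borel_measurable \<mu>"
    and phi_nonneg: "\<And>x. \<phi> x \<ge> 0"
    and aff: "\<And>i j \<alpha>. 1 \<le> i \<Longrightarrow> i < j \<Longrightarrow> j \<le> M \<Longrightarrow> \<alpha> \<in> {0..1} \<Longrightarrow>
               0 < w_affinity \<mu> \<phi> (p i) (p j) \<alpha> \<and> w_affinity \<mu> \<phi> (p i) (p j) \<alpha> < \<infinity>"
begin

lemma chern_ij: assumes ij: "1 \<le> i" "i < j" "j \<le> M" shows "chern \<mu> \<phi> (p i) (p j)"
proof (rule chern.intro)
  show "\<And>\<alpha>. \<alpha> \<in> {0..1} \<Longrightarrow> 0 < w_affinity \<mu> \<phi> (p i) (p j) \<alpha> \<and> w_affinity \<mu> \<phi> (p i) (p j) \<alpha> < \<infinity>"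
    using aff[OF ij] by blast
qed (use ij in \<open>auto simp: sfin p_meas p_pos phi_nonneg\<close>)

lemma ind_meas:
  assumes i: "i \<in> {1..M}" and dm: "\<delta> \<in> PiM {..<n} (\<lambda>_. \<mu>) \<rightarrow>\<^sub>M count_space {1..M}"
  shows "(\<lambda>x. ennreal (\<Prod>k<n. p i (x k)) * (ennreal (\<Prod>k<n. \<phi> (x k)) * indicator {y. \<delta> y \<noteq> i} x))
           \<in> borel_measurable (PiM {..<n} (\<lambda>_. \<mu>))"
    and "(\<lambda>x. ennreal (\<Prod>k<n. \<phi> (x k)) * indicator {y. \<delta> y \<noteq> i} x) \<in> borel_measurable (PiM {..<n} (\<lambda>_. \<mu>))"
proof -
  note p_meas[OF i, measurable]
  have c: "(\<lambda>x. indicator ({1..M}-{i}) (\<delta> x) :: ennreal) \<in> borel_measurable (PiM {..<n} (\<lambda>_. \<mu>))"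
    by (rule measurable_compose[OF dm]) simp
  have ind: "(\<lambda>x. indicator {y. \<delta> y \<noteq> i} x :: ennreal) \<in> borel_measurable (PiM {..<n} (\<lambda>_. \<mu>))"
  proof (rule measurable_cong[THEN iffD1, OF _ c])
    fix x assume "x \<in> space (PiM {..<n} (\<lambda>_. \<mu>))"
    then have "\<delta> x \<in> {1..M}" using measurable_space[OF dm] by auto
    then show "indicator ({1..M}-{i}) (\<delta> x) = (indicator {y. \<delta> y \<noteq> i} x :: ennreal)"
      by (auto simp: indicator_def)
  qed
  have pm: "(\<lambda>x. ennreal (\<Prod>k<n. p i (x k))) \<in> borel_measurable (PiM {..<n} (\<lambda>_. \<mu>))"
    by measurable
  show gm: "(\<lambda>x. ennreal (\<Prod>k<n. \<phi> (x k)) * indicator {y. \<delta> y \<noteq> i} x) \<in> borel_measurable (PiM {..<n} (\<lambda>_. \<mu>))"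
    by (intro borel_measurable_times_ennreal ind) measurable
  show "(\<lambda>x. ennreal (\<Prod>k<n. p i (x k)) * (ennreal (\<Prod>k<n. \<phi> (x k)) * indicator {y. \<delta> y \<noteq> i} x))
           \<in> borel_measurable (PiM {..<n} (\<lambda>_. \<mu>))"
    by (intro borel_measurable_times_ennreal pm gm)
qed

lemma wloss_eq:
  assumes i: "i \<in> {1..M}" and dm: "\<delta> \<in> PiM {..<n} (\<lambda>_. \<mu>) \<rightarrow>\<^sub>M count_space {1..M}"
  shows "weighted_loss \<mu> \<phi> p n \<delta> i =
    (\<integral>\<^sup>+x. ennreal (\<Prod>k<n. p i (x k)) * (ennreal (\<Prod>k<n. \<phi> (x k)) * indicator {y. \<delta> y \<noteq> i} x) \<partial>PiM {..<n} (\<lambda>_. \<mu>))"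
proof -
  note p_meas[OF i, measurable]
  have eq: "PiM {..<n} (\<lambda>_. density \<mu> (\<lambda>z. ennreal (p i z))) =
        density (PiM {..<n} (\<lambda>_. \<mu>)) (\<lambda>x. ennreal (\<Prod>k<n. p i (x k)))"
    by (rule PiM_density_iid[OF sfin]) (auto simp: p_pos[OF i] less_imp_le)
  have pm: "(\<lambda>x. ennreal (\<Prod>k<n. p i (x k))) \<in> borel_measurable (PiM {..<n} (\<lambda>_. \<mu>))"
    by measurable
  have "weighted_loss \<mu> \<phi> p n \<delta> i = (\<integral>\<^sup>+x. ennreal (\<Prod>k<n. \<phi> (x k)) * indicator {y. \<delta> y \<noteq> i} x
      \<partial>density (PiM {..<n} (\<lambda>_. \<mu>)) (\<lambda>x. ennreal (\<Prod>k<n. p i (x k))))"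
    unfolding weighted_loss_def eq ..
  also have "\<dots> = (\<integral>\<^sup>+x. ennreal (\<Prod>k<n. p i (x k)) * (ennreal (\<Prod>k<n. \<phi> (x k)) * indicator {y. \<delta> y \<noteq> i} x) \<partial>PiM {..<n} (\<lambda>_. \<mu>))"
    by (rule nn_integral_density[OF pm ind_meas(2)[OF i dm]])
  finally show ?thesis .
qed

lemma opt_lower:
  assumes ij: "1 \<le> i0" "i0 < j0" "j0 \<le> M"
  shows "(\<integral>\<^sup>+x. ennreal (\<Prod>k<n. \<phi> (x k)) * ennreal (min (\<Prod>k<n. p i0 (x k)) (\<Prod>k<n. p j0 (x k))) \<partial>PiM {..<n} (\<lambda>_. \<mu>))
         \<le> opt_loss \<mu> \<phi> p M n"
  unfolding opt_loss_def
proof (rule INF_greatest)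
  fix \<delta> assume dm: "\<delta> \<in> PiM {..<n} (\<lambda>_. \<mu>) \<rightarrow>\<^sub>M count_space {1..M}"
  have i0: "i0 \<in> {1..M}" and j0: "j0 \<in> {1..M}" using ij by auto
  define f where "f i x = ennreal (\<Prod>k<n. p i (x k)) * (ennreal (\<Prod>k<n. \<phi> (x k)) * indicator {y. \<delta> y \<noteq> i} x)" for i x
  have "(\<integral>\<^sup>+x. ennreal (\<Prod>k<n. \<phi> (x k)) * ennreal (min (\<Prod>k<n. p i0 (x k)) (\<Prod>k<n. p j0 (x k))) \<partial>PiM {..<n} (\<lambda>_. \<mu>))
      \<le> (\<integral>\<^sup>+x. f i0 x + f j0 x \<partial>PiM {..<n} (\<lambda>_. \<mu>))"
  proof (rule nn_integral_mono)
    fix x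
    have m0: "0 \<le> (\<Prod>k<n. p i0 (x k))" "0 \<le> (\<Prod>k<n. p j0 (x k))"
      using p_pos[OF i0] p_pos[OF j0] by (simp_all add: prod_nonneg less_imp_le)
    show "ennreal (\<Prod>k<n. \<phi> (x k)) * ennreal (min (\<Prod>k<n. p i0 (x k)) (\<Prod>k<n. p j0 (x k))) \<le> f i0 x + f j0 x"
    proof (cases "\<delta> x = i0")
      case True
      then have "\<delta> x \<noteq> j0" using ij by auto
      then have "f j0 x = ennreal (\<Prod>k<n. p j0 (x k)) * ennreal (\<Prod>k<n. \<phi> (x k))" by (simp add: f_def)
      moreover have "ennreal (min (\<Prod>k<n. p i0 (x k)) (\<Prod>k<n. p j0 (x k))) \<le> ennreal (\<Prod>k<n. p j0 (x k))"
        by (intro ennreal_leI) simp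
      ultimately have "ennreal (\<Prod>k<n. \<phi> (x k)) * ennreal (min (\<Prod>k<n. p i0 (x k)) (\<Prod>k<n. p j0 (x k))) \<le> f j0 x"
        by (simp add: mult.commute mult_left_mono)
      then show ?thesis by (rule order_trans) simp
    next
      case False
      then have "f i0 x = ennreal (\<Prod>k<n. p i0 (x k)) * ennreal (\<Prod>k<n. \<phi> (x k))" by (simp add: f_def)
      moreover have "ennreal (min (\<Prod>k<n. p i0 (x k)) (\<Prod>k<n. p j0 (x k))) \<le> ennreal (\<Prod>k<n. p i0 (x k))"
        by (intro ennreal_leI) simp
      ultimately have "ennreal (\<Prod>k<n. \<phi> (x k)) * ennreal (min (\<Prod>k<n. p i0 (x k)) (\<Prod>k<n. p j0 (x k))) \<le> f i0 x"
        by (simp add: mult.commute mult_left_mono)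
      then show ?thesis by (rule order_trans) simp
    qed
  qed
  also have "\<dots> = (\<integral>\<^sup>+x. f i0 x \<partial>PiM {..<n} (\<lambda>_. \<mu>)) + (\<integral>\<^sup>+x. f j0 x \<partial>PiM {..<n} (\<lambda>_. \<mu>))"
    unfolding f_def by (rule nn_integral_add) (rule ind_meas(1)[OF i0 dm], rule ind_meas(1)[OF j0 dm])
  also have "\<dots> = weighted_loss \<mu> \<phi> p n \<delta> i0 + weighted_loss \<mu> \<phi> p n \<delta> j0"
    unfolding f_def by (simp add: wloss_eq[OF i0 dm] wloss_eq[OF j0 dm])
  also have "\<dots> = (\<Sum>i\<in>{i0, j0}. weighted_loss \<mu> \<phi> p n \<delta> i)" using ij by simp
  also have "\<dots> \<le> (\<Sum>i=1..M. weighted_loss \<mu> \<phi> p n \<delta> i)"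
    using i0 j0 by (intro sum_mono2) auto
  finally show "(\<integral>\<^sup>+x. ennreal (\<Prod>k<n. \<phi> (x k)) * ennreal (min (\<Prod>k<n. p i0 (x k)) (\<Prod>k<n. p j0 (x k))) \<partial>PiM {..<n} (\<lambda>_. \<mu>))
         \<le> total_loss \<mu> \<phi> p M n \<delta>" unfolding total_loss_def .
qed


definition C :: real where "C = Min {w_chernoff \<mu> \<phi> (p i) (p j) | i j. 1 \<le> i \<and> i < j \<and> j \<le> M}"

lemma Cset_fin: "finite {w_chernoff \<mu> \<phi> (p i) (p j) | i j. 1 \<le> i \<and> i < j \<and> j \<le> M}"
proof -
  have "{w_chernoff \<mu> \<phi> (p i) (p j) | i j. 1 \<le> i \<and> i < j \<and> j \<le> M}
        \<subseteq> (\<lambda>(i,j). w_chernoff \<mu> \<phi> (p i) (p j)) ` ({1..M} \<times> {1..M})" by auto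
  then show ?thesis by (rule finite_subset) auto
qed

lemma Cset_ne: "{w_chernoff \<mu> \<phi> (p i) (p j) | i j. 1 \<le> i \<and> i < j \<and> j \<le> M} \<noteq> {}"
proof -
  have "w_chernoff \<mu> \<phi> (p 1) (p 2) \<in> {w_chernoff \<mu> \<phi> (p i) (p j) | i j. 1 \<le> i \<and> i < j \<and> j \<le> M}"
    apply (rule CollectI)
    apply (rule exI[of _ 1])
    apply (rule exI[of _ 2])
    using M by simp
  then show ?thesis by blast
qed

lemma C_le: "1 \<le> i \<Longrightarrow> i < j \<Longrightarrow> j \<le> M \<Longrightarrow> C \<le> w_chernoff \<mu> \<phi> (p i) (p j)"
  unfolding C_def by (rule Min_le[OF Cset_fin]) auto

lemma C_att: "\<exists>i0 j0. 1 \<le> i0 \<and> i0 < j0 \<and> j0 \<le> M \<and> C = w_chernoff \<mu> \<phi> (p i0) (p j0)"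
  using Min_in[OF Cset_fin Cset_ne] unfolding C_def by auto

lemma alpha_lt:
  assumes ij: "1 \<le> i" "i < j" "j \<le> M" and e: "e > 0"
  shows "\<exists>a\<in>{0..1}. w_affinity \<mu> \<phi> (p i) (p j) a \<le> ennreal (exp (- (C - e)))"
proof -
  interpret ch: chern \<mu> \<phi> "p i" "p j" by (rule chern_ij[OF ij])
  define D where "D = w_chernoff \<mu> \<phi> (p i) (p j)"
  have "D - e < D" using e by simp
  then have "D - e < (SUP a\<in>{0..1}. - ln (enn2real (w_affinity \<mu> \<phi> (p i) (p j) a)))"
    by (simp add: D_def w_chernoff_def)
  then obtain a where a: "a \<in> {0..1}" and lt: "D - e < - ln (enn2real (w_affinity \<mu> \<phi> (p i) (p j) a))"
    using less_cSUP_iff[OF _ ch.bdd] by auto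
  have rp: "enn2real (w_affinity \<mu> \<phi> (p i) (p j) a) > 0" by (rule ch.rho_pos_real[OF a])
  have "ln (enn2real (w_affinity \<mu> \<phi> (p i) (p j) a)) < - (C - e)"
    using lt C_le[OF ij] by (simp add: D_def)
  then have "exp (ln (enn2real (w_affinity \<mu> \<phi> (p i) (p j) a))) < exp (- (C - e))"
    by (simp only: exp_less_cancel_iff)
  then have r1: "enn2real (w_affinity \<mu> \<phi> (p i) (p j) a) < exp (- (C - e))"
    using rp by simp
  have r2: "w_affinity \<mu> \<phi> (p i) (p j) a = ennreal (enn2real (w_affinity \<mu> \<phi> (p i) (p j) a))"
    using aff[OF ij a] by simp
  have "ennreal (enn2real (w_affinity \<mu> \<phi> (p i) (p j) a)) \<le> ennreal (exp (- (C - e)))"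
    using r1 by (intro ennreal_leI) simp
  then have "w_affinity \<mu> \<phi> (p i) (p j) a \<le> ennreal (exp (- (C - e)))"
    using r2 by simp
  with a show ?thesis by blast
qed

lemma w_aff_swap: "w_affinity \<mu> \<phi> q r (1 - a) = w_affinity \<mu> \<phi> r q a"
  unfolding w_affinity_def by (simp add: mult_ac)

lemma alpha_ord:
  assumes i: "i \<in> {1..M}" and j: "j \<in> {1..M}" and ij: "i \<noteq> j" and e: "e > 0"
  shows "\<exists>a\<in>{0..1}. w_affinity \<mu> \<phi> (p i) (p j) a \<le> ennreal (exp (- (C - e)))"
proof (cases "i < j")
  case True then show ?thesis using alpha_lt[OF _ True _ e] i j by auto
next
  case False
  then have "j < i" using ij by simp
  then obtain a where a: "a \<in> {0..1}" "w_affinity \<mu> \<phi> (p j) (p i) a \<le> ennreal (exp (- (C - e)))"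
    using alpha_lt[OF _ _ _ e, of j i] i j by auto
  then have "w_affinity \<mu> \<phi> (p i) (p j) (1 - a) \<le> ennreal (exp (- (C - e)))" by (simp add: w_aff_swap)
  moreover have "1 - a \<in> {0..1}" using a by auto
  ultimately show ?thesis by blast
qed

definition pm :: "nat \<Rightarrow> 'a \<Rightarrow> real" where "pm j x = (if j \<in> {1..M} then p j x else 1)"

lemma pm_meas[measurable]: "pm j \<in> borel_measurable \<mu>"
proof (cases "j \<in> {1..M}")
  case True
  then have "pm j = p j" by (simp add: pm_def fun_eq_iff)
  with True show ?thesis by (simp add: p_meas)
next
  case False
  then have "pm j = (\<lambda>_. 1)" by (auto simp: pm_def fun_eq_iff)
  then show ?thesis by simp
qed

definition dstar :: "nat \<Rightarrow> (nat \<Rightarrow> 'a) \<Rightarrow> nat" where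
  "dstar n x = (LEAST i. i \<in> {1..M} \<and> (\<forall>j\<in>{1..M}. (\<Prod>k<n. pm j (x k)) \<le> (\<Prod>k<n. pm i (x k))))"

lemma dstar_prop:
  "dstar n x \<in> {1..M} \<and> (\<forall>j\<in>{1..M}. (\<Prod>k<n. p j (x k)) \<le> (\<Prod>k<n. p (dstar n x) (x k)))"
proof -
  define v where "v j = (\<Prod>k<n. pm j (x k))" for j
  have fin: "finite (v ` {1..M})" by simp
  have ne: "v ` {1..M} \<noteq> {}" using M by auto
  obtain i where i: "i \<in> {1..M}" "v i = Max (v ` {1..M})" using Max_in[OF fin ne] by auto
  have "\<forall>j\<in>{1..M}. v j \<le> v i" using i fin by auto
  then have ex: "i \<in> {1..M} \<and> (\<forall>j\<in>{1..M}. (\<Prod>k<n. pm j (x k)) \<le> (\<Prod>k<n. pm i (x k)))"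
    using i by (simp add: v_def)
  have P: "dstar n x \<in> {1..M} \<and> (\<forall>j\<in>{1..M}. (\<Prod>k<n. pm j (x k)) \<le> (\<Prod>k<n. pm (dstar n x) (x k)))"
    unfolding dstar_def by (rule LeastI[of _ i]) (rule ex)
  have pmp: "pm j = p j" if "j \<in> {1..M}" for j using that by (simp add: pm_def fun_eq_iff)
  from P have d: "dstar n x \<in> {1..M}" by simp
  have pmd: "pm (dstar n x) = p (dstar n x)" by (rule pmp[OF d])
  show ?thesis using P unfolding pmd by (simp add: pmp)
qed

lemma dstar_meas: "dstar n \<in> PiM {..<n} (\<lambda>_. \<mu>) \<rightarrow>\<^sub>M count_space {1..M}"
proof (rule measurable_count_space_extend[OF subset_UNIV])
  show "dstar n \<in> space (PiM {..<n} (\<lambda>_. \<mu>)) \<rightarrow> {1..M}" using dstar_prop by auto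
  have pr[measurable]: "Measurable.pred (PiM {..<n} (\<lambda>_. \<mu>)) (\<lambda>x. (\<Prod>k<n. pm j (x k)) \<le> (\<Prod>k<n. pm i (x k)))"
    for i j
  proof -
    note pm_meas[of i, measurable] pm_meas[of j, measurable]
    have f1: "(\<lambda>x. \<Prod>k<n. pm j (x k)) \<in> borel_measurable (PiM {..<n} (\<lambda>_. \<mu>))" by measurable
    have f2: "(\<lambda>x. \<Prod>k<n. pm i (x k)) \<in> borel_measurable (PiM {..<n} (\<lambda>_. \<mu>))" by measurable
    show ?thesis unfolding pred_def by (rule borel_measurable_le[OF f1 f2])
  qed
  show "dstar n \<in> PiM {..<n} (\<lambda>_. \<mu>) \<rightarrow>\<^sub>M count_space UNIV"
    unfolding dstar_def by measurable
qed


lemma h_meas: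
  assumes i: "i \<in> {1..M}" and j: "j \<in> {1..M}"
  shows "(\<lambda>x. ennreal (\<Prod>k<n. \<phi> (x k)) * ennreal (\<Prod>k<n. p i (x k)) *
            indicator {y. (\<Prod>k<n. p i (y k)) \<le> (\<Prod>k<n. p j (y k))} x) \<in> borel_measurable (PiM {..<n} (\<lambda>_. \<mu>))"
proof -
  note p_meas[OF i, measurable] p_meas[OF j, measurable]
  have f1: "(\<lambda>x. \<Prod>k<n. p i (x k)) \<in> borel_measurable (PiM {..<n} (\<lambda>_. \<mu>))" by measurable
  have f2: "(\<lambda>x. \<Prod>k<n. p j (x k)) \<in> borel_measurable (PiM {..<n} (\<lambda>_. \<mu>))" by measurable
  have "{y. (\<Prod>k<n. p i (y k)) \<le> (\<Prod>k<n. p j (y k))} \<inter> space (PiM {..<n} (\<lambda>_. \<mu>)) =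
        {w \<in> space (PiM {..<n} (\<lambda>_. \<mu>)). (\<Prod>k<n. p i (w k)) \<le> (\<Prod>k<n. p j (w k))}" by auto
  also have "\<dots> \<in> sets (PiM {..<n} (\<lambda>_. \<mu>))" by (rule borel_measurable_le[OF f1 f2])
  finally have "(indicator {y. (\<Prod>k<n. p i (y k)) \<le> (\<Prod>k<n. p j (y k))} :: _ \<Rightarrow> ennreal)
      \<in> borel_measurable (PiM {..<n} (\<lambda>_. \<mu>))"
    by (subst borel_measurable_indicator_iff)
  then have ind: "(\<lambda>x. indicator {y. (\<Prod>k<n. p i (y k)) \<le> (\<Prod>k<n. p j (y k))} x :: ennreal)
      \<in> borel_measurable (PiM {..<n} (\<lambda>_. \<mu>))" by simp
  have a1: "(\<lambda>x. ennreal (\<Prod>k<n. \<phi> (x k))) \<in> borel_measurable (PiM {..<n} (\<lambda>_. \<mu>))" by measurable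
  have a2: "(\<lambda>x. ennreal (\<Prod>k<n. p i (x k))) \<in> borel_measurable (PiM {..<n} (\<lambda>_. \<mu>))" by measurable
  show ?thesis by (intro borel_measurable_times_ennreal a1 a2 ind)
qed

lemma opt_upper:
  assumes e: "e > 0"
  shows "opt_loss \<mu> \<phi> p M n \<le> ennreal (real M ^ 2 * exp (- real n * (C - e)))"
proof -
  define c where "c = ennreal (exp (- (C - e))) ^ n"
  define h where "h i j x = ennreal (\<Prod>k<n. \<phi> (x k)) * ennreal (\<Prod>k<n. p i (x k)) *
            indicator {y. (\<Prod>k<n. p i (y k)) \<le> (\<Prod>k<n. p j (y k))} x" for i j x
  have dm: "dstar n \<in> PiM {..<n} (\<lambda>_. \<mu>) \<rightarrow>\<^sub>M count_space {1..M}" by (rule dstar_meas)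
  have wl: "weighted_loss \<mu> \<phi> p n (dstar n) i \<le> (\<Sum>j\<in>{1..M}-{i}. c)" if i: "i \<in> {1..M}" for i
  proof -
    have "weighted_loss \<mu> \<phi> p n (dstar n) i =
      (\<integral>\<^sup>+x. ennreal (\<Prod>k<n. p i (x k)) * (ennreal (\<Prod>k<n. \<phi> (x k)) * indicator {y. dstar n y \<noteq> i} x) \<partial>PiM {..<n} (\<lambda>_. \<mu>))"
      by (rule wloss_eq[OF i dm])
    also have "\<dots> \<le> (\<integral>\<^sup>+x. (\<Sum>j\<in>{1..M}-{i}. h i j x) \<partial>PiM {..<n} (\<lambda>_. \<mu>))"
    proof (rule nn_integral_mono)
      fix x
      show "ennreal (\<Prod>k<n. p i (x k)) * (ennreal (\<Prod>k<n. \<phi> (x k)) * indicator {y. dstar n y \<noteq> i} x)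
            \<le> (\<Sum>j\<in>{1..M}-{i}. h i j x)"
      proof (cases "dstar n x = i")
        case True then show ?thesis by simp
      next
        case False
        define d where "d = dstar n x"
        have d: "d \<in> {1..M} - {i}" using dstar_prop[of n x] False by (simp add: d_def)
        have le: "(\<Prod>k<n. p i (x k)) \<le> (\<Prod>k<n. p d (x k))" using dstar_prop[of n x] i by (simp add: d_def)
        have "ennreal (\<Prod>k<n. p i (x k)) * (ennreal (\<Prod>k<n. \<phi> (x k)) * indicator {y. dstar n y \<noteq> i} x) = h i d x"
          using False le by (simp add: h_def mult.commute)
        also have "\<dots> \<le> (\<Sum>j\<in>{1..M}-{i}. h i j x)"
          by (rule member_le_sum[OF d]) auto
        finally show ?thesis .
      qed
    qed
    also have "\<dots> = (\<Sum>j\<in>{1..M}-{i}. \<integral>\<^sup>+x. h i j x \<partial>PiM {..<n} (\<lambda>_. \<mu>))"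
      by (rule nn_integral_sum) (use i in \<open>auto simp: h_def intro!: h_meas\<close>)
    also have "\<dots> \<le> (\<Sum>j\<in>{1..M}-{i}. c)"
    proof (rule sum_mono)
      fix j assume j: "j \<in> {1..M} - {i}"
      obtain a where a: "a \<in> {0..1}" "w_affinity \<mu> \<phi> (p i) (p j) a \<le> ennreal (exp (- (C - e)))"
        using alpha_ord[OF i _ _ e, of j] j by auto
      have "(\<integral>\<^sup>+x. h i j x \<partial>PiM {..<n} (\<lambda>_. \<mu>)) \<le> w_affinity \<mu> \<phi> (p i) (p j) a ^ n"
        unfolding h_def using i j
        by (intro pair_bound[OF sfin phi_meas p_meas p_meas _ _ phi_nonneg a(1)]) (auto simp: p_pos)
      also have "\<dots> \<le> c" unfolding c_def by (intro power_mono a(2)) simp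
      finally show "(\<integral>\<^sup>+x. h i j x \<partial>PiM {..<n} (\<lambda>_. \<mu>)) \<le> c" .
    qed
    finally show ?thesis .
  qed
  have "opt_loss \<mu> \<phi> p M n \<le> total_loss \<mu> \<phi> p M n (dstar n)"
    unfolding opt_loss_def by (rule INF_lower[OF dm])
  also have "\<dots> \<le> (\<Sum>i=1..M. \<Sum>j\<in>{1..M}-{i}. c)"
    unfolding total_loss_def by (intro sum_mono wl)
  also have "\<dots> \<le> (\<Sum>i=1..M. \<Sum>j\<in>{1..M}. c)"
    by (intro sum_mono sum_mono2) auto
  also have "\<dots> = of_nat M * (of_nat M * c)" by simp
  also have "\<dots> = ennreal (real M ^ 2 * exp (- real n * (C - e)))"
  proof -
    have "c = ennreal (exp (- real n * (C - e)))"
      unfolding c_def by (simp add: ennreal_power exp_of_nat_mult[symmetric] algebra_simps)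
    then show ?thesis
      by (simp add: ennreal_mult[symmetric] power2_eq_square ennreal_of_nat_eq_real_of_nat mult_ac)
  qed
  finally show ?thesis .
qed

lemma main: "(\<lambda>n. - ln (enn2real (opt_loss \<mu> \<phi> p M n)) / real n) \<longlonglongrightarrow> C"
proof -
  obtain i0 j0 where ij: "1 \<le> i0" "i0 < j0" "j0 \<le> M" and Ceq: "C = w_chernoff \<mu> \<phi> (p i0) (p j0)"
    using C_att by blast
  interpret ch: chern \<mu> \<phi> "p i0" "p j0" by (rule chern_ij[OF ij])
  have Mpos: "real M > 0" using M by simp
  show ?thesis unfolding tendsto_iff
  proof (intro allI impI)
    fix r :: real assume r: "r > 0"
    define e where "e = r / 2"
    have e: "e > 0" using r by (simp add: e_def)
    have ev1: "\<forall>\<^sub>F n in sequentially. ennreal (exp (- real n * (C + e))) \<le> opt_loss \<mu> \<phi> p M n"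
      using ch.CLB[OF e] unfolding Ceq[symmetric]
      by eventually_elim (rule order_trans, assumption, rule opt_lower[OF ij])
    obtain N :: nat where N: "real N > 2 * ln (real M) / e" using reals_Archimedean2 by blast
    have ev2: "\<forall>\<^sub>F n in sequentially. n \<ge> Suc N" by (rule eventually_ge_at_top)
    show "\<forall>\<^sub>F n in sequentially. dist (- ln (enn2real (opt_loss \<mu> \<phi> p M n)) / real n) C < r"
      using ev1 ev2
    proof eventually_elim
      case (elim n)
      then have npos: "real n > 0" by simp
      define lo where "lo = exp (- real n * (C + e))"
      define hi where "hi = real M ^ 2 * exp (- real n * (C - e))"
      have lop: "lo > 0" by (simp add: lo_def)
      have hip: "hi > 0" using Mpos by (simp add: hi_def)
      have up: "opt_loss \<mu> \<phi> p M n \<le> ennreal hi" unfolding hi_def by (rule opt_upper[OF e])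
      have fin: "opt_loss \<mu> \<phi> p M n < top" using up by (simp add: le_less_trans)
      have v1: "lo \<le> enn2real (opt_loss \<mu> \<phi> p M n)"
        using enn2real_mono[OF elim(1)[folded lo_def] fin] lop by simp
      have v2: "enn2real (opt_loss \<mu> \<phi> p M n) \<le> hi"
        using enn2real_mono[OF up] hip by simp
      define v where "v = enn2real (opt_loss \<mu> \<phi> p M n)"
      have vp: "v > 0" using v1 lop by (simp add: v_def)
      have l1: "ln lo \<le> ln v" using v1 lop by (simp add: v_def)
      have l2: "ln v \<le> ln hi" using v2 vp by (simp add: v_def)
      have lnlo: "ln lo = - real n * (C + e)" by (simp add: lo_def)
      have lnhi: "ln hi = 2 * ln (real M) - real n * (C - e)"
        using Mpos by (simp add: hi_def ln_mult ln_realpow)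
      have u1: "- ln v / real n \<le> C + e"
      proof -
        have "- ln v \<le> real n * (C + e)" using l1 lnlo by simp
        then have "- ln v / real n \<le> real n * (C + e) / real n" using npos by (intro divide_right_mono) auto
        then show ?thesis using npos by simp
      qed
      have "2 * ln (real M) / e < real n" using N elim(2) by simp
      then have "2 * ln (real M) < real n * e" using e by (simp add: divide_less_eq)
      then have "2 * ln (real M) / real n < e" using npos by (simp add: divide_less_eq mult.commute)
      moreover have "- ln v / real n \<ge> C - e - 2 * ln (real M) / real n"
      proof -
        have "- ln v \<ge> real n * (C - e) - 2 * ln (real M)" using l2 lnhi by simp
        then have "- ln v / real n \<ge> (real n * (C - e) - 2 * ln (real M)) / real n"
          using npos by (intro divide_right_mono) auto
        also have "(real n * (C - e) - 2 * ln (real M)) / real n = C - e - 2 * ln (real M) / real n"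
          using npos by (simp add: field_simps)
        finally show ?thesis .
      qed
      ultimately have u2: "- ln v / real n > C - 2 * e" by linarith
      show ?case using u1 u2 e by (simp add: dist_real_def v_def e_def abs_less_iff)
    qed
  qed
qed
end

theorem theorem4p6:
  fixes \<mu> :: "'a::polish_space measure"
    and M :: nat
    and p :: "nat \<Rightarrow> 'a \<Rightarrow> real"
    and \<phi> :: "'a \<Rightarrow> real"
  assumes M: "M \<ge> 2"
    and borel: "sets \<mu> = sets borel"
    and sfin: "sigma_finite_measure \<mu>"
    and p_meas: "\<And>i. i \<in> {1..M} \<Longrightarrow> p i \<in> borel_measurable \<mu>"
    and p_pos: "\<And>i x. i \<in> {1..M} \<Longrightarrow> p i x > 0"
    and p_prob: "\<And>i. i \<in> {1..M} \<Longrightarrow> prob_space (density \<mu> (\<lambda>x. ennreal (p i x)))"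
    and phi_meas: "\<phi> \<in> borel_measurable \<mu>"
    and phi_nonneg: "\<And>x. \<phi> x \<ge> 0"
    and aff: "\<And>i j \<alpha>. 1 \<le> i \<Longrightarrow> i < j \<Longrightarrow> j \<le> M \<Longrightarrow> \<alpha> \<in> {0..1} \<Longrightarrow>
               0 < w_affinity \<mu> \<phi> (p i) (p j) \<alpha> \<and> w_affinity \<mu> \<phi> (p i) (p j) \<alpha> < \<infinity>"
  shows "(\<lambda>n. - ln (enn2real (opt_loss \<mu> \<phi> p M n)) / real n)
           \<longlonglongrightarrow> Min {w_chernoff \<mu> \<phi> (p i) (p j) | i j. 1 \<le> i \<and> i < j \<and> j \<le> M}"
  proof -
  interpret S: setting \<mu> M p \<phi>
    by (rule setting.intro) (fact M sfin p_meas p_pos phi_meas phi_nonneg aff)+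
  show ?thesis using S.main unfolding S.C_def .
qed

end
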